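(* Let $(\varphi_\alpha)_{\alpha>0}$ be a non-linear regularizing filter satisfying Assumption A, and let $\mathcal{R}$ be the functional $\mathcal{R}((x_\lambda))=\sum_\lambda s_\lambda(\kappa_\lambda x_\lambda)$, where $s_\lambda$ are proper, convex, lower semi-continuous with $s_\lambda(0)=0$ and $\varphi_\alpha(\kappa_\lambda,\cdot)=\operatorname{prox}_{\alpha s_\lambda}$ for all $\alpha>0$. Let $\alpha>0$ and $z,z^k\in\ell^2(\Lambda)$ with $z^k\to z$, and set $c_\alpha:=\mathbf{M}_\kappa^+\circ\Phi_{\alpha,\kappa}(z)$. Then: (Existence) $\operatorname{dom}(\mathbf{M}_\kappa^+\circ\Phi_{\alpha,\kappa})=\ell^2(\Lambda)$. (Stability) With $c^k:=\mathbf{M}_\kappa^+\circ\Phi_{\alpha,\kappa}(z^k)$ we have $c^k\rightharpoonup c_\alpha$ weakly and $\mathcal{R}(c^k)\to\mathcal{R}(c_\alpha)$ as $k\to\infty$. (Weak convergence) Suppose $z=\mathbf{M}_\kappa c^+$ for some $c^+\in\ell^2(\Lambda)$ and $z\in\operatorname{ran}(\Phi_{\tilde\alpha,\kappa})$ for some $\tilde\alpha>0$. Let $\delta_k\to0$ with $\|z^k-z\|\le\delta_k$, and let $\alpha_k\to0$ with $\delta_k^2/\alpha_k\to0$. Then $c^k:=\mathbf{M}_\kappa^+\circ\Phi_{\alpha_k,\kappa}(z^k)$ satisfies $c^k\rightharpoonup c^+$ weakly and $\mathcal{R}(c^k)\to\mathcal{R}(c^+)$ as $k\to\infty$.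
   Context: $\Lambda$ is an at most countable index set and $\kappa=(\kappa_\lambda)_{\lambda\in\Lambda}\in(0,\infty)^\Lambda$ with $\sup_\lambda\kappa_\lambda<\infty$. $\mathbf{M}_\kappa\colon\ell^2(\Lambda)\to\ell^2(\Lambda)$, $(x_\lambda)\mapsto(\kappa_\lambda x_\lambda)$; $\mathbf{M}_\kappa^+$ is its Moore–Penrose inverse, with domain $\{(c_\lambda)\in\ell^2:(c_\lambda/\kappa_\lambda)\in\ell^2\}$ and $\mathbf{M}_\kappa^+((c_\lambda))=(c_\lambda/\kappa_\lambda)$. A non-linear regularizing filter is a family $(\varphi_\alpha)_{\alpha>0}$ of functions $\varphi_\alpha\colon(0,\infty)\times\mathbb{R}\to\mathbb{R}$ such that for all $\alpha,\kappa>0$: (F1) $\varphi_\alpha(\kappa,\cdot)$ is non-decreasing; (F2) $\varphi_\alpha(\kappa,\cdot)$ is 1-Lipschitz; (F3) $\varphi_\alpha(\kappa,0)=0$; (F4) $\lim_{\alpha\to0}\varphi_\alpha(\kappa,c)=c$ for all $c\in\mathbb{R}$. $\Phi_{\alpha,\kappa}((c_\lambda))=(\varphi_\alpha(\kappa_\lambda,c_\lambda))_\lambda$ on $\ell^2(\Lambda)$; $\operatorname{dom}(\mathbf{M}_\kappa^+\circ\Phi_{\alpha,\kappa})=\{z:\Phi_{\alpha,\kappa}(z)\in\operatorname{dom}(\mathbf{M}_\kappa^+)\}$. Assumption A: (A1) for all $\kappa>0$ and $y\in\mathbb{R}$, the set $\{(w-y)/\alpha:\varphi_\alpha(\kappa,w)=y\}$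 does not depend on $\alpha>0$; (A2) for some $\tilde\alpha>0$ there exist $b,c>0$ such that for all $\kappa>0$ and $x\in\mathbb{R}$: $|x|\le\min\big(\varphi_{\tilde\alpha}(\kappa,\cdot)^{-1}(c\kappa)\big)\Rightarrow|\varphi_{\tilde\alpha}(\kappa,x)|\le\frac{\kappa^2}{\kappa^2+\tilde\alpha b}|x|$. $\operatorname{prox}_f(x)=\operatorname{argmin}_y\tfrac12|x-y|^2+f(y)$. *)

theory Defs
  imports "HOL-Analysis.Analysis"
begin

definition l2 :: "('i \<Rightarrow> real) set" where
  "l2 = {x. (\<lambda>i. (x i)\<^sup>2) summable_on UNIV}"

definition l2norm :: "('i \<Rightarrow> real) \<Rightarrow> real" where
  "l2norm x = sqrt (\<Sum>\<^sub>\<infinity>i. (x i)\<^sup>2)"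

definition weak_conv_l2 :: "(nat \<Rightarrow> 'i \<Rightarrow> real) \<Rightarrow> ('i \<Rightarrow> real) \<Rightarrow> bool" where
  "weak_conv_l2 X c \<longleftrightarrow> (\<forall>k. X k \<in> l2) \<and> c \<in> l2 \<and>
     (\<forall>y\<in>l2. (\<lambda>k. \<Sum>\<^sub>\<infinity>i. X k i * y i) \<longlonglongrightarrow> (\<Sum>\<^sub>\<infinity>i. c i * y i))"

definition Mk :: "('i \<Rightarrow> real) \<Rightarrow> ('i \<Rightarrow> real) \<Rightarrow> ('i \<Rightarrow> real)" where
  "Mk \<kappa> x = (\<lambda>i. \<kappa> i * x i)"

definition Mk_plus :: "('i \<Rightarrow> real) \<Rightarrow> ('i \<Rightarrow> real) \<Rightarrow> ('i \<Rightarrow> real)" where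
  "Mk_plus \<kappa> c = (\<lambda>i. c i / \<kappa> i)"

definition dom_Mk_plus :: "('i \<Rightarrow> real) \<Rightarrow> ('i \<Rightarrow> real) set" where
  "dom_Mk_plus \<kappa> = {c \<in> l2. (\<lambda>i. c i / \<kappa> i) \<in> l2}"

text \<open>A filter is phi :: alpha => kappa => c => value.\<close>
definition Phi :: "(real \<Rightarrow> real \<Rightarrow> real \<Rightarrow> real) \<Rightarrow> real \<Rightarrow> ('i \<Rightarrow> real) \<Rightarrow> ('i \<Rightarrow> real) \<Rightarrow> ('i \<Rightarrow> real)" where
  "Phi \<phi> \<alpha> \<kappa> c = (\<lambda>i. \<phi> \<alpha> (\<kappa> i) (c i))"

definition dom_MPhi :: "(real \<Rightarrow> real \<Rightarrow> real \<Rightarrow> real) \<Rightarrow> real \<Rightarrow> ('i \<Rightarrow> real) \<Rightarrow> ('i \<Rightarrow> real) set" where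
  "dom_MPhi \<phi> \<alpha> \<kappa> = {z \<in> l2. Phi \<phi> \<alpha> \<kappa> z \<in> dom_Mk_plus \<kappa>}"

definition nonlin_reg_filter :: "(real \<Rightarrow> real \<Rightarrow> real \<Rightarrow> real) \<Rightarrow> bool" where
  "nonlin_reg_filter \<phi> \<longleftrightarrow> (\<forall>\<alpha>>0. \<forall>k>0.
      mono (\<phi> \<alpha> k) \<and>
      (\<forall>x y. \<bar>\<phi> \<alpha> k x - \<phi> \<alpha> k y\<bar> \<le> \<bar>x - y\<bar>) \<and>
      \<phi> \<alpha> k 0 = 0) \<and>
    (\<forall>k>0. \<forall>c. ((\<lambda>\<alpha>. \<phi> \<alpha> k c) \<longlongrightarrow> c) (at_right 0))"

text \<open>Assumption A. In (A2), min of the preimage is read as the infimum in the extended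
  reals (Inf of the empty set = +infinity).\<close>
definition assumptionA :: "(real \<Rightarrow> real \<Rightarrow> real \<Rightarrow> real) \<Rightarrow> bool" where
  "assumptionA \<phi> \<longleftrightarrow>
    (\<forall>k>0. \<forall>y. \<forall>\<alpha>>0. \<forall>\<beta>>0.
        {(w - y) / \<alpha> | w. \<phi> \<alpha> k w = y} = {(w - y) / \<beta> | w. \<phi> \<beta> k w = y}) \<and>
    (\<exists>\<alpha>t>0. \<exists>b>0. \<exists>c>0. \<forall>k>0. \<forall>x.
        ereal \<bar>x\<bar> \<le> (INF w\<in>{w. \<phi> \<alpha>t k w = c * k}. ereal w) \<longrightarrow>
        \<bar>\<phi> \<alpha>t k x\<bar> \<le> k\<^sup>2 / (k\<^sup>2 + \<alpha>t * b) * \<bar>x\<bar>)"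

definition proper_fun :: "(real \<Rightarrow> ereal) \<Rightarrow> bool" where
  "proper_fun f \<longleftrightarrow> (\<forall>x. f x > -\<infinity>) \<and> (\<exists>x. f x < \<infinity>)"

definition convex_fun :: "(real \<Rightarrow> ereal) \<Rightarrow> bool" where
  "convex_fun f \<longleftrightarrow> (\<forall>x y t. 0 \<le> t \<and> t \<le> 1 \<longrightarrow>
      f (t * x + (1 - t) * y) \<le> ereal t * f x + ereal (1 - t) * f y)"

definition lsc_fun :: "(real \<Rightarrow> ereal) \<Rightarrow> bool" where
  "lsc_fun f \<longleftrightarrow> (\<forall>x X. X \<longlonglongrightarrow> x \<longrightarrow> f x \<le> liminf (\<lambda>n. f (X n)))"

definition prox :: "(real \<Rightarrow> ereal) \<Rightarrow> real \<Rightarrow> real" where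
  "prox f x = (THE y. \<forall>u. ereal ((x - y)\<^sup>2 / 2) + f y \<le> ereal ((x - u)\<^sup>2 / 2) + f u)"

definition Rfun :: "('i \<Rightarrow> real \<Rightarrow> ereal) \<Rightarrow> ('i \<Rightarrow> real) \<Rightarrow> ('i \<Rightarrow> real) \<Rightarrow> ereal" where
  "Rfun s \<kappa> x = (\<Sum>\<^sub>\<infinity>i. s i (\<kappa> i * x i))"

end

theory Submission
  imports Defs
begin

lemma lsc_nbhd:
  fixes g :: "real \<Rightarrow> ereal"
  assumes lsc: "lsc_fun g" and gx0: "g x0 = ereal v0"
  shows "\<exists>r>0. \<forall>y. \<bar>y - x0\<bar> < r \<longrightarrow> ereal (v0 - 1) < g y"
proof (rule ccontr)
  assume neg: "\<not> ?thesis"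
  have "\<forall>n::nat. \<exists>y. \<bar>y - x0\<bar> < 1 / (real n + 1) \<and> g y \<le> ereal (v0 - 1)"
  proof (rule allI)
    fix n :: nat
    have H: "\<And>r. r > 0 \<Longrightarrow> \<exists>y. \<bar>y - x0\<bar> < r \<and> g y \<le> ereal (v0 - 1)"
      using neg by (meson not_less)
    have "1 / (real n + 1) > 0" by simp
    then show "\<exists>y. \<bar>y - x0\<bar> < 1 / (real n + 1) \<and> g y \<le> ereal (v0 - 1)"
      using H by blast
  qed
  then obtain Y where Y: "\<And>n. \<bar>Y n - x0\<bar> < 1 / (real n + 1)" "\<And>n. g (Y n) \<le> ereal (v0 - 1)"
    by metis
  have "Y \<longlonglongrightarrow> x0"
  proof (rule LIMSEQ_I)
    fix e :: real assume "e > 0"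
    then obtain N :: nat where N: "1 / e < real N" using reals_Archimedean2 by blast
    show "\<exists>N. \<forall>n\<ge>N. norm (Y n - x0) < e"
    proof (intro exI allI impI)
      fix n assume "N \<le> n"
      then have "1 / e < real n + 1" using N by linarith
      then have "1 / (real n + 1) < e" using \<open>e>0\<close>
        by (simp add: divide_less_eq field_simps)
      then show "norm (Y n - x0) < e" using Y(1)[of n] by simp
    qed
  qed
  then have "g x0 \<le> liminf (\<lambda>n. g (Y n))" using lsc unfolding lsc_fun_def by blast
  also have "\<dots> \<le> liminf (\<lambda>n. ereal (v0 - 1))"
    by (rule Liminf_mono) (use Y(2) in auto)
  also have "\<dots> = ereal (v0 - 1)" by (simp add: Liminf_const)
  finally show False using gx0 by simp
qed

lemma lower_affine:
  fixes g :: "real \<Rightarrow> ereal"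
  assumes pr: "proper_fun g" and cv: "convex_fun g" and lsc: "lsc_fun g"
  shows "\<exists>C D. D \<ge> 0 \<and> (\<forall>y. ereal (C - D * \<bar>y\<bar>) \<le> g y)"
proof -
  obtain x0 where "g x0 < \<infinity>" using pr unfolding proper_fun_def by blast
  moreover have "g x0 > -\<infinity>" using pr unfolding proper_fun_def by blast
  ultimately obtain v0 where gx0: "g x0 = ereal v0" by (cases "g x0") auto
  obtain r where r: "r > 0" "\<And>y. \<bar>y - x0\<bar> < r \<Longrightarrow> ereal (v0 - 1) < g y"
    using lsc_nbhd[OF lsc gx0] by blast
  have main: "ereal (v0 - 1 - (2/r) * \<bar>y - x0\<bar>) \<le> g y" for y
  proof (cases "\<bar>y - x0\<bar> < r")
    case True
    then have "ereal (v0 - 1) < g y" using r by blast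
    moreover have "v0 - 1 - (2/r) * \<bar>y - x0\<bar> \<le> v0 - 1" using r(1) by simp
    ultimately show ?thesis by (meson ereal_less_eq(3) less_imp_le order_trans)
  next
    case False
    show ?thesis
    proof (cases "g y = \<infinity>")
      case True then show ?thesis by simp
    next
      case False
      moreover have "g y > -\<infinity>" using pr unfolding proper_fun_def by blast
      ultimately obtain w where gy: "g y = ereal w" by (cases "g y") auto
      define t where "t = r / (2 * \<bar>y - x0\<bar>)"
      have d: "\<bar>y - x0\<bar> \<ge> r" using \<open>\<not> \<bar>y - x0\<bar> < r\<close> by simp
      have t0: "0 < t" "t \<le> 1" using d r(1) by (auto simp: t_def field_simps)
      have "\<bar>(t*y + (1-t)*x0) - x0\<bar> = \<bar>t * (y - x0)\<bar>"
        by (simp add: algebra_simps)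
      also have "\<dots> = t * \<bar>y - x0\<bar>" using t0 by (simp add: abs_mult)
      also have "\<dots> = r/2" using d r(1) by (simp add: t_def)
      finally have "\<bar>(t*y + (1-t)*x0) - x0\<bar> < r" using r(1) by simp
      then have "ereal (v0 - 1) < g (t*y + (1-t)*x0)" using r by blast
      also have "\<dots> \<le> ereal t * g y + ereal (1-t) * g x0"
        using cv t0 unfolding convex_fun_def by auto
      also have "\<dots> = ereal (t * w + (1-t) * v0)" by (simp add: gy gx0)
      finally have "v0 - 1 < t * w + (1-t) * v0" by simp
      then have "t * v0 - 1 < t * w" by (simp add: algebra_simps)
      then have "v0 - 1/t < w" using t0 by (simp add: field_simps)
      moreover have "1/t = (2/r) * \<bar>y - x0\<bar>" using d r(1) by (simp add: t_def)
      ultimately show ?thesis using gy by simp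
    qed
  qed
  show ?thesis
  proof (intro exI conjI allI)
    show "0 \<le> 2/r" using r(1) by simp
    fix y
    have "v0 - 1 - 2 / r * \<bar>x0\<bar> - 2 / r * \<bar>y\<bar> \<le> v0 - 1 - (2/r) * \<bar>y - x0\<bar>"
    proof -
      have "\<bar>y - x0\<bar> \<le> \<bar>y\<bar> + \<bar>x0\<bar>" by simp
      then have "(2/r) * \<bar>y - x0\<bar> \<le> (2/r) * (\<bar>y\<bar> + \<bar>x0\<bar>)" using r(1) by (intro mult_left_mono) auto
      moreover have "(2/r) * (\<bar>y\<bar> + \<bar>x0\<bar>) = (2/r) * \<bar>y\<bar> + (2/r) * \<bar>x0\<bar>" by (rule distrib_left)
      ultimately show ?thesis by linarith
    qed
    then show "ereal (v0 - 1 - 2 / r * \<bar>x0\<bar> - 2 / r * \<bar>y\<bar>) \<le> g y"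
      using main[of y] by (meson ereal_less_eq(3) order_trans)
  qed
qed

lemma quad_lower:
  fixes t p :: real
  shows "t\<^sup>2 / 2 - p * t \<ge> - p\<^sup>2 / 2"
proof -
  have "0 \<le> (t - p)\<^sup>2 / 2" by simp
  then show ?thesis by (simp add: power2_diff algebra_simps)
qed

lemma quad_upper:
  fixes t p q :: real
  assumes "t \<ge> 0" "p \<ge> 0" "t\<^sup>2 / 2 - p * t \<le> q"
  shows "t \<le> 2 * p + 2 * \<bar>q\<bar> + 2"
proof (rule ccontr)
  assume "\<not> ?thesis"
  then have h1: "t / 2 - p \<ge> \<bar>q\<bar> + 1" and h2: "t \<ge> 1" using assms by auto
  have "1 * (\<bar>q\<bar> + 1) \<le> t * (t / 2 - p)"
    by (rule mult_mono) (use h1 h2 in auto)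
  also have "\<dots> = t\<^sup>2 / 2 - p * t" by (simp add: power2_eq_square algebra_simps)
  finally show False using assms(3) by (smt (verit))
qed

lemma mid_ineq: fixes X Y L Q A B C :: real assumes "A \<le> (B + C)/2" "X = (Y + L)/2 - Q/8" "0 < Q"
  shows "X + A < (Y + B + (L + C))/2" using assms by argo

lemma le_div_pos: "(a::real) > 0 \<Longrightarrow> a * v \<le> T \<Longrightarrow> v \<le> T / a"
  by (simp add: pos_le_divide_eq mult.commute)

lemma le_div_pos2: "(a::real) > 0 \<Longrightarrow> v \<le> T / a \<Longrightarrow> a * v \<le> T"
  by (simp add: pos_le_divide_eq mult.commute)

lemma prox_unique_min:
  fixes s :: "real \<Rightarrow> ereal"
  assumes pr: "proper_fun s" and cv: "convex_fun s" and lsc: "lsc_fun s" and a: "a > 0"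
  shows "\<exists>!y. \<forall>u. ereal ((x - y)\<^sup>2 / 2) + ereal a * s y \<le> ereal ((x - u)\<^sup>2 / 2) + ereal a * s u"
proof -
  obtain C D where D: "D \<ge> 0" and CD: "\<And>y. ereal (C - D * \<bar>y\<bar>) \<le> s y"
    using lower_affine[OF pr cv lsc] by blast
  define Dom where "Dom = {y. s y < \<infinity>}"
  define sr where "sr y = real_of_ereal (s y)" for y
  have sfin: "s y = ereal (sr y)" if "y \<in> Dom" for y
  proof -
    have "s y > -\<infinity>" using pr unfolding proper_fun_def by blast
    then show ?thesis using that unfolding Dom_def sr_def by (cases "s y") auto
  qed
  have srlow: "C - D * \<bar>y\<bar> \<le> sr y" if "y \<in> Dom" for y
    using CD[of y] sfin[OF that] by simp
  define H where "H y = (x - y)\<^sup>2 / 2 + a * sr y" for y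
  define M0 where "M0 = a * C - a * D * \<bar>x\<bar> - (a * D)\<^sup>2 / 2"
  have Hlow: "M0 \<le> H y" if "y \<in> Dom" for y
  proof -
    have t: "\<bar>y\<bar> \<le> \<bar>x\<bar> + \<bar>x - y\<bar>" by linarith
    have "a * (C - D * \<bar>y\<bar>) \<le> a * sr y" using srlow[OF that] a by simp
    moreover have "a * D * \<bar>y\<bar> \<le> a * D * (\<bar>x\<bar> + \<bar>x - y\<bar>)"
      using t a D by (intro mult_left_mono) auto
    moreover have "\<bar>x - y\<bar>\<^sup>2 / 2 - (a * D) * \<bar>x - y\<bar> \<ge> - (a * D)\<^sup>2 / 2" by (rule quad_lower)
    moreover have "\<bar>x - y\<bar>\<^sup>2 = (x - y)\<^sup>2" by simp
    ultimately show ?thesis unfolding H_def M0_def by (simp add: algebra_simps)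
  qed
  obtain x0 where "s x0 < \<infinity>" using pr unfolding proper_fun_def by blast
  then have Dne: "Dom \<noteq> {}" unfolding Dom_def by blast
  define m where "m = Inf (H ` Dom)"
  have bdd: "bdd_below (H ` Dom)" using Hlow by (auto intro!: bdd_belowI)
  have mle: "m \<le> H y" if "y \<in> Dom" for y unfolding m_def using bdd that by (auto intro: cInf_lower)
  have "\<forall>n. \<exists>y\<in>Dom. H y < m + inverse (real (Suc n))"
  proof
    fix n
    have "m < m + inverse (real (Suc n))" by simp
    then show "\<exists>y\<in>Dom. H y < m + inverse (real (Suc n))"
      using cInf_lessD[of "H ` Dom"] Dne unfolding m_def by auto
  qed
  then obtain Y where YD: "\<And>n. Y n \<in> Dom" and YH: "\<And>n. H (Y n) < m + inverse (real (Suc n))"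
    by metis
  define p where "p = a * D"
  define q where "q = m + 1 - a * C + p * \<bar>x\<bar>"
  have Ybd: "\<bar>Y n\<bar> \<le> \<bar>x\<bar> + (2 * p + 2 * \<bar>q\<bar> + 2)" for n
  proof -
    have "inverse (real (Suc n)) \<le> 1" by (simp add: inverse_le_1_iff)
    then have h: "H (Y n) \<le> m + 1" using YH[of n] by linarith
    have "a * (C - D * \<bar>Y n\<bar>) \<le> a * sr (Y n)" using srlow[OF YD] a by simp
    moreover have "a * D * \<bar>Y n\<bar> \<le> a * D * (\<bar>x\<bar> + \<bar>x - Y n\<bar>)"
      using a D by (intro mult_left_mono) auto
    moreover have "\<bar>x - Y n\<bar>\<^sup>2 = (x - Y n)\<^sup>2" by simp
    ultimately have "\<bar>x - Y n\<bar>\<^sup>2 / 2 - p * \<bar>x - Y n\<bar> \<le> q"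
      using h unfolding H_def p_def q_def by (simp add: algebra_simps)
    then have "\<bar>x - Y n\<bar> \<le> 2 * p + 2 * \<bar>q\<bar> + 2"
      by (rule quad_upper[rotated 2]) (use a D in \<open>auto simp: p_def\<close>)
    then show ?thesis by linarith
  qed
  have "bounded (range Y)" unfolding bounded_iff using Ybd by auto
  then obtain l r where r: "strict_mono r" and lim: "(Y \<circ> r) \<longlonglongrightarrow> l"
    using bounded_imp_convergent_subsequence by blast
  define b where "b n = (m + inverse (real (Suc (r n))) - (x - Y (r n))\<^sup>2 / 2) / a" for n
  have blim: "b \<longlonglongrightarrow> (m - (x - l)\<^sup>2 / 2) / a"
  proof -
    have "(\<lambda>n. inverse (real (Suc (r n)))) \<longlonglongrightarrow> 0"
      using LIMSEQ_subseq_LIMSEQ[OF LIMSEQ_inverse_real_of_nat r] by (simp add: o_def)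
    moreover have "(\<lambda>n. Y (r n)) \<longlonglongrightarrow> l" using lim by (simp add: o_def)
    ultimately have h: "(\<lambda>n. m + inverse (real (Suc (r n))) - (x - Y (r n))\<^sup>2 / 2) \<longlonglongrightarrow> m + 0 - (x - l)\<^sup>2 / 2"
      by (intro tendsto_intros) auto
    have "(\<lambda>n. (m + inverse (real (Suc (r n))) - (x - Y (r n))\<^sup>2 / 2) / a) \<longlonglongrightarrow> (m + 0 - (x - l)\<^sup>2 / 2) / a"
      by (rule tendsto_divide[OF h tendsto_const]) (use a in auto)
    then show ?thesis unfolding b_def by simp
  qed
  have sb: "s (Y (r n)) \<le> ereal (b n)" for n
  proof -
    have "a * sr (Y (r n)) \<le> m + inverse (real (Suc (r n))) - (x - Y (r n))\<^sup>2 / 2"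
      using YH[of "r n"] unfolding H_def by simp
    then have "sr (Y (r n)) \<le> b n" unfolding b_def by (rule le_div_pos[OF a])
    then show ?thesis using sfin[OF YD] by simp
  qed
  have "s l \<le> liminf (\<lambda>n. s ((Y \<circ> r) n))" using lsc lim unfolding lsc_fun_def by blast
  also have "\<dots> \<le> liminf (\<lambda>n. ereal (b n))"
    by (rule Liminf_mono) (use sb in auto)
  also have "\<dots> = ereal ((m - (x - l)\<^sup>2 / 2) / a)"
    by (rule lim_imp_Liminf) (use blim in auto)
  finally have sl: "s l \<le> ereal ((m - (x - l)\<^sup>2 / 2) / a)" .
  then have lD: "l \<in> Dom" by (cases "s l") (auto simp: Dom_def)
  have "sr l \<le> (m - (x - l)\<^sup>2 / 2) / a" using sl sfin[OF lD] by simp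
  then have "a * sr l \<le> m - (x - l)\<^sup>2 / 2" by (rule le_div_pos2[OF a])
  then have "H l \<le> m" unfolding H_def by simp
  then have Hl: "H l = m" using mle[OF lD] by linarith
  define E where "E y = ereal ((x - y)\<^sup>2 / 2) + ereal a * s y" for y
  have EH: "E y = ereal (H y)" if "y \<in> Dom" for y
    unfolding E_def H_def using sfin[OF that] by simp
  have Einf: "E y = \<infinity>" if "y \<notin> Dom" for y
  proof -
    have "s y = \<infinity>" using that unfolding Dom_def by simp
    then show ?thesis unfolding E_def using a by simp
  qed
  have lmin: "E l \<le> E u" for u
  proof (cases "u \<in> Dom")
    case True then show ?thesis using EH[OF lD] EH[OF True] Hl mle[OF True] by simp
  next
    case False then show ?thesis using Einf by simp
  qed
  show ?thesis
  proof (rule ex1I[of _ l])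
    show "\<forall>u. ereal ((x - l)\<^sup>2 / 2) + ereal a * s l \<le> ereal ((x - u)\<^sup>2 / 2) + ereal a * s u"
      using lmin unfolding E_def by blast
  next
    fix y assume "\<forall>u. ereal ((x - y)\<^sup>2 / 2) + ereal a * s y \<le> ereal ((x - u)\<^sup>2 / 2) + ereal a * s u"
    then have ymin: "E y \<le> E u" for u unfolding E_def by blast
    have yD: "y \<in> Dom"
    proof (rule ccontr)
      assume "y \<notin> Dom"
      then have "E y = \<infinity>" by (rule Einf)
      then show False using ymin[of l] EH[OF lD] by simp
    qed
    have Hy: "H y = m" using ymin[of l] EH[OF lD] EH[OF yD] Hl mle[OF yD] by simp
    show "y = l"
    proof (rule ccontr)
      assume ne: "y \<noteq> l"
      define c where "c = (y + l) / 2"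
      have cc: "c = (1/2)*y + (1-1/2)*l" unfolding c_def by simp
      have "s c \<le> ereal (1/2) * s y + ereal (1 - 1/2) * s l"
        unfolding cc by (rule cv[unfolded convex_fun_def, rule_format]) simp
      also have "\<dots> = ereal ((sr y + sr l) / 2)" using sfin[OF yD] sfin[OF lD] by simp
      finally have sc: "s c \<le> ereal ((sr y + sr l) / 2)" .
      then have cD: "c \<in> Dom" by (cases "s c") (auto simp: Dom_def)
      have "sr c \<le> (sr y + sr l) / 2" using sc sfin[OF cD] by simp
      then have "a * sr c \<le> a * ((sr y + sr l) / 2)" using a by simp
      moreover have "a * ((sr y + sr l) / 2) = (a * sr y + a * sr l) / 2" by (simp add: algebra_simps)
      ultimately have h1: "a * sr c \<le> (a * sr y + a * sr l) / 2" by simp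
      have "(x - c)\<^sup>2 / 2 = ((x - y)\<^sup>2 / 2 + (x - l)\<^sup>2 / 2) / 2 - (y - l)\<^sup>2 / 8"
        unfolding c_def by (simp add: power2_eq_square field_simps)
      moreover have "(y - l)\<^sup>2 > 0" using ne by simp
      ultimately have "H c < (H y + H l) / 2" unfolding H_def by (rule mid_ineq[OF h1])
      then show False using Hy Hl mle[OF cD] by simp
    qed
  qed
qed

locale proxs =
  fixes s :: "real \<Rightarrow> ereal" and P :: "real \<Rightarrow> real \<Rightarrow> real"
  assumes pr: "proper_fun s" and cv: "convex_fun s" and lsc: "lsc_fun s" and s0: "s 0 = 0"
    and Pdef: "\<And>a. a > 0 \<Longrightarrow> P a = prox (\<lambda>y. ereal a * s y)"
    and P0: "\<And>a. a > 0 \<Longrightarrow> P a 0 = 0"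
    and Plip: "\<And>a x y. a > 0 \<Longrightarrow> \<bar>P a x - P a y\<bar> \<le> \<bar>x - y\<bar>"
begin

lemma opt:
  assumes a: "a > 0"
  shows "ereal ((x - P a x)\<^sup>2 / 2) + ereal a * s (P a x) \<le> ereal ((x - u)\<^sup>2 / 2) + ereal a * s u"
proof -
  have "\<forall>u. ereal ((x - prox (\<lambda>y. ereal a * s y) x)\<^sup>2 / 2) + ereal a * s (prox (\<lambda>y. ereal a * s y) x)
          \<le> ereal ((x - u)\<^sup>2 / 2) + ereal a * s u"
    unfolding prox_def by (rule theI'[OF prox_unique_min[OF pr cv lsc a]])
  then show ?thesis using Pdef[OF a] by simp
qed

lemma snn: "0 \<le> s u"
proof (rule ccontr)
  assume "\<not> 0 \<le> s u"
  then have neg: "s u < 0" by simp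
  moreover have "s u > -\<infinity>" using pr unfolding proper_fun_def by blast
  ultimately obtain v where v: "s u = ereal v" "v < 0" by (cases "s u") auto
  define a where "a = (u\<^sup>2 + 1) / (- v)"
  have a: "a > 0" using v(2) unfolding a_def by (intro divide_pos_pos) (auto intro: add_nonneg_pos)
  have av: "a * v = - (u\<^sup>2 + 1)" using v(2) unfolding a_def by (simp add: field_simps)
  have "ereal ((0 - P a 0)\<^sup>2 / 2) + ereal a * s (P a 0) \<le> ereal ((0 - u)\<^sup>2 / 2) + ereal a * s u"
    by (rule opt[OF a])
  then have "0 \<le> u\<^sup>2 / 2 + a * v" using P0[OF a] s0 v(1) by simp
  then show False using av zero_le_power2[of u] by argo
qed

lemma sP_bound:
  assumes a: "a > 0"
  shows "s (P a x) \<le> ereal (x\<^sup>2 / (2 * a))"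
proof -
  have h: "ereal ((x - P a x)\<^sup>2 / 2) + ereal a * s (P a x) \<le> ereal ((x - 0)\<^sup>2 / 2) + ereal a * s 0"
    by (rule opt[OF a])
  have "s (P a x) \<noteq> \<infinity>"
  proof
    assume "s (P a x) = \<infinity>" then show False using h a s0 by simp
  qed
  moreover have "s (P a x) \<ge> 0" by (rule snn)
  ultimately obtain v where v: "s (P a x) = ereal v" "v \<ge> 0" by (cases "s (P a x)") auto
  have "(x - P a x)\<^sup>2 / 2 + a * v \<le> x\<^sup>2 / 2" using h v s0 by simp
  then have "a * v \<le> x\<^sup>2 / 2" using zero_le_power2[of "x - P a x"] by argo
  then have "v \<le> x\<^sup>2 / (2 * a)" using a by (simp add: field_simps)
  then show ?thesis using v by simp
qed

definition sP :: "real \<Rightarrow> real \<Rightarrow> real" where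
  "sP a x = real_of_ereal (s (P a x))"

lemma sP_eq:
  assumes a: "a > 0" shows "s (P a x) = ereal (sP a x)"
proof -
  have "s (P a x) \<noteq> \<infinity>" using sP_bound[OF a, of x] by auto
  moreover have "s (P a x) \<noteq> -\<infinity>" using snn[of "P a x"] by auto
  ultimately show ?thesis unfolding sP_def by (cases "s (P a x)") auto
qed

lemma sP_nonneg: "a > 0 \<Longrightarrow> 0 \<le> sP a x"
  using snn[of "P a x"] sP_eq[of a x] by simp

lemma sP_le: "a > 0 \<Longrightarrow> sP a x \<le> x\<^sup>2 / (2 * a)"
  using sP_bound[of a x] sP_eq[of a x] by simp

lemma P_cont: "a > 0 \<Longrightarrow> X \<longlonglongrightarrow> x \<Longrightarrow> (\<lambda>n. P a (X n)) \<longlonglongrightarrow> P a x"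
proof -
  assume a: "a > 0" and X: "X \<longlonglongrightarrow> x"
  have h: "(\<lambda>n. \<bar>X n - x\<bar>) \<longlonglongrightarrow> 0" using X by (simp add: LIM_zero_iff tendsto_rabs_zero_iff)
  have "(\<lambda>n. \<bar>P a (X n) - P a x\<bar>) \<longlonglongrightarrow> 0"
    by (rule tendsto_sandwich[of "\<lambda>_. 0" _ _ "\<lambda>n. \<bar>X n - x\<bar>"]) (use Plip[OF a] h in auto)
  then show ?thesis by (simp add: LIM_zero_iff tendsto_rabs_zero_iff)
qed

lemma sP_cont:
  assumes a: "a > 0" and X: "X \<longlonglongrightarrow> x"
  shows "(\<lambda>n. sP a (X n)) \<longlonglongrightarrow> sP a x"
proof (rule order_tendstoI)
  fix b assume b: "b < sP a x"
  have PX: "(\<lambda>n. P a (X n)) \<longlonglongrightarrow> P a x" by (rule P_cont[OF a X])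
  have "s (P a x) \<le> liminf (\<lambda>n. s (P a (X n)))"
    using lsc PX unfolding lsc_fun_def by blast
  then have "ereal (sP a x) \<le> liminf (\<lambda>n. ereal (sP a (X n)))"
    using sP_eq[OF a] by simp
  moreover have "ereal b < ereal (sP a x)" using b by simp
  ultimately have "\<forall>\<^sub>F n in sequentially. ereal b < ereal (sP a (X n))"
    unfolding le_Liminf_iff by blast
  then show "\<forall>\<^sub>F n in sequentially. b < sP a (X n)" by simp
next
  fix b assume b: "sP a x < b"
  have PX: "(\<lambda>n. P a (X n)) \<longlonglongrightarrow> P a x" by (rule P_cont[OF a X])
  define g where "g n = ((X n - P a x)\<^sup>2 - (X n - P a (X n))\<^sup>2) / (2 * a) + sP a x" for n
  have "g \<longlonglongrightarrow> ((x - P a x)\<^sup>2 - (x - P a x)\<^sup>2) / (2 * a) + sP a x"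
    unfolding g_def by (intro tendsto_intros X PX) (use a in auto)
  then have g: "g \<longlonglongrightarrow> sP a x" by simp
  have le: "sP a (X n) \<le> g n" for n
  proof -
    have "ereal ((X n - P a (X n))\<^sup>2 / 2) + ereal a * s (P a (X n))
          \<le> ereal ((X n - P a x)\<^sup>2 / 2) + ereal a * s (P a x)" by (rule opt[OF a])
    then have "(X n - P a (X n))\<^sup>2 / 2 + a * sP a (X n) \<le> (X n - P a x)\<^sup>2 / 2 + a * sP a x"
      using sP_eq[OF a] by simp
    then have "a * sP a (X n) \<le> ((X n - P a x)\<^sup>2 - (X n - P a (X n))\<^sup>2) / 2 + a * sP a x"
      by (simp add: field_simps)
    then show ?thesis unfolding g_def using a by (simp add: field_simps)
  qed
  have "\<forall>\<^sub>F n in sequentially. g n < b" using order_tendstoD(2)[OF g b] .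
  then show "\<forall>\<^sub>F n in sequentially. sP a (X n) < b"
    by eventually_elim (use le in \<open>auto intro: le_less_trans\<close>)
qed

end

definition nf :: "(real \<Rightarrow> real) \<Rightarrow> bool" where
  "nf f \<longleftrightarrow> mono f \<and> (\<forall>x y. \<bar>f x - f y\<bar> \<le> \<bar>x - y\<bar>) \<and> f 0 = 0"

lemma nf_pos: assumes "nf f" "0 \<le> x" shows "0 \<le> f x \<and> f x \<le> x"
proof -
  have "f 0 \<le> f x" using assms unfolding nf_def mono_def by blast
  moreover have "\<bar>f x - f 0\<bar> \<le> \<bar>x - 0\<bar>" using assms unfolding nf_def by blast
  moreover have "f 0 = 0" using assms unfolding nf_def by blast
  ultimately show ?thesis using assms(2) by simp
qed

lemma nf_neg: assumes "nf f" "x \<le> 0" shows "x \<le> f x \<and> f x \<le> 0"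
proof -
  have "f x \<le> f 0" using assms unfolding nf_def mono_def by blast
  moreover have "\<bar>f x - f 0\<bar> \<le> \<bar>x - 0\<bar>" using assms unfolding nf_def by blast
  moreover have "f 0 = 0" using assms unfolding nf_def by blast
  ultimately show ?thesis using assms(2) by simp
qed

lemma nf_abs: "nf f \<Longrightarrow> \<bar>f x\<bar> \<le> \<bar>x\<bar>"
  using nf_pos[of f x] nf_neg[of f x] by (cases "0 \<le> x") auto

lemma nf_cont: "nf f \<Longrightarrow> continuous_on UNIV f"
  unfolding nf_def
  by (intro lipschitz_on_continuous_on[of 1] lipschitz_onI) (auto simp: dist_real_def)

lemma T1:
  fixes f :: "real \<Rightarrow> real"
  assumes f: "nf f" and k: "k > 0" and c: "c > 0" and r: "r > 0"
    and A2: "\<forall>x. ereal \<bar>x\<bar> \<le> (INF w\<in>{w. f w = c * k}. ereal w) \<longrightarrow> \<bar>f x\<bar> \<le> r * \<bar>x\<bar>"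
    and x: "\<bar>x\<bar> \<le> c * k / r"
  shows "\<bar>f x\<bar> \<le> r * \<bar>x\<bar>"
proof -
  define S where "S = {w. f w = c * k}"
  have Spos: "w > 0" if "w \<in> S" for w
  proof (rule ccontr)
    assume "\<not> w > 0"
    then have "f w \<le> 0" using nf_neg[OF f, of w] by simp
    then show False using that mult_pos_pos[OF c k] unfolding S_def by simp
  qed
  have "ereal \<bar>x\<bar> \<le> (INF w\<in>S. ereal w)"
  proof (rule INF_greatest)
    fix w assume wS: "w \<in> S"
    have closed: "closed S" unfolding S_def
      by (rule closed_Collect_eq[OF nf_cont[OF f] continuous_on_const])
    have bdd: "bdd_below S" using Spos by (auto intro!: bdd_belowI[of _ 0] less_imp_le)
    define m where "m = Inf S"
    have mS: "m \<in> S" unfolding m_def using closed_contains_Inf[of S] wS bdd closed by blast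
    have mle: "m \<le> w'" if "w' \<in> S" for w' unfolding m_def using bdd that by (rule cInf_lower[rotated])
    have "ereal \<bar>m\<bar> \<le> (INF w\<in>S. ereal w)"
      using Spos[OF mS] mle by (auto intro!: INF_greatest)
    then have "\<bar>f m\<bar> \<le> r * \<bar>m\<bar>" using A2 unfolding S_def by blast
    then have "c * k \<le> r * m" using mS Spos[OF mS] c k unfolding S_def by simp
    then have "c * k / r \<le> m" using r by (simp add: divide_le_eq mult.commute)
    then show "ereal \<bar>x\<bar> \<le> ereal w" using x mle[OF wS] by simp
  qed
  then show ?thesis using A2 unfolding S_def by blast
qed

lemma wbound_pos:
  fixes x y t :: real
  assumes t: "t > 0" and xy: "0 \<le> y" "y \<le> x"
  shows "\<bar>y + t * (x - y)\<bar> \<le> max 1 t * \<bar>x\<bar>"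
proof -
  have h0: "0 \<le> t * (x - y)" using t xy by simp
  show ?thesis
  proof (cases "t \<le> 1")
    case True
    have "t * (x - y) \<le> 1 * (x - y)" using True xy by (intro mult_right_mono) auto
    then show ?thesis using True h0 xy by simp
  next
    case False
    have e: "y + t * (x - y) = t * x - (t - 1) * y" by (simp add: algebra_simps)
    have "0 \<le> (t - 1) * y" using False xy by simp
    then have "y + t * (x - y) \<le> t * x" unfolding e by simp
    moreover have "0 \<le> y + t * (x - y)" using h0 xy by simp
    ultimately show ?thesis using False xy by simp
  qed
qed

lemma wbound:
  fixes x y t :: real
  assumes t: "t > 0" and xy: "(0 \<le> y \<and> y \<le> x) \<or> (x \<le> y \<and> y \<le> 0)"
  shows "\<bar>y + t * (x - y)\<bar> \<le> max 1 t * \<bar>x\<bar>"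
proof (cases "0 \<le> y \<and> y \<le> x")
  case True then show ?thesis using wbound_pos[OF t] by blast
next
  case False
  then have "0 \<le> -y" "-y \<le> -x" using xy by auto
  from wbound_pos[OF t this] have "\<bar>-y + t * (-x - -y)\<bar> \<le> max 1 t * \<bar>-x\<bar>" .
  moreover have "-y + t * (-x - -y) = - (y + t * (x - y))" by (simp add: algebra_simps)
  ultimately show ?thesis by simp
qed

lemma nf_sign: "nf g \<Longrightarrow> (0 \<le> g x \<and> g x \<le> x) \<or> (x \<le> g x \<and> g x \<le> 0)"
  using nf_pos[of g x] nf_neg[of g x] by (cases "0 \<le> x") auto

lemma T2:
  fixes f g :: "real \<Rightarrow> real"
  assumes f: "nf f" and g: "nf g" and a: "a > 0" and aT: "aT > 0"
    and A1: "\<forall>y. {(w - y) / a | w. g w = y} = {(w - y) / aT | w. f w = y}"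
    and k: "k > 0" and c: "c > 0" and r: "r > 0"
    and A2: "\<forall>x. ereal \<bar>x\<bar> \<le> (INF w\<in>{w. f w = c * k}. ereal w) \<longrightarrow> \<bar>f x\<bar> \<le> r * \<bar>x\<bar>"
    and x: "max 1 (aT / a) * \<bar>x\<bar> \<le> c * k / r"
  shows "\<bar>g x\<bar> \<le> max 1 (aT / a) * r * \<bar>x\<bar>"
proof -
  define y where "y = g x"
  have "(x - y) / a \<in> {(w - y) / a | w. g w = y}" unfolding y_def by blast
  then have "(x - y) / a \<in> {(w - y) / aT | w. f w = y}" using A1 by blast
  then obtain w where w: "f w = y" "(w - y) / aT = (x - y) / a" by (auto simp: eq_commute)
  have weq: "w = y + (aT / a) * (x - y)"
  proof -
    have "w - y = aT * ((x - y) / a)" using w(2) aT by (simp add: field_simps)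
    then show ?thesis by (simp add: algebra_simps)
  qed
  have wb: "\<bar>w\<bar> \<le> max 1 (aT / a) * \<bar>x\<bar>"
    unfolding weq y_def by (rule wbound) (use a aT nf_sign[OF g] in auto)
  have "\<bar>f w\<bar> \<le> r * \<bar>w\<bar>" by (rule T1[OF f k c r A2]) (use wb x in linarith)
  also have "\<dots> \<le> r * (max 1 (aT / a) * \<bar>x\<bar>)" using wb r by (intro mult_left_mono) auto
  finally show ?thesis using w(1) unfolding y_def by (simp add: mult_ac)
qed

lemma T3:
  fixes g :: "real \<Rightarrow> real"
  assumes hyp: "\<And>x. T * \<bar>x\<bar> \<le> c * k / r \<Longrightarrow> \<bar>g x\<bar> \<le> T * r * \<bar>x\<bar>"
    and gabs: "\<And>x. \<bar>g x\<bar> \<le> \<bar>x\<bar>"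
    and T: "T \<ge> 1" and c: "c > 0" and k: "k > 0" "k \<le> K" and \<beta>: "\<beta> > 0"
    and r: "r = k\<^sup>2 / (k\<^sup>2 + \<beta>)"
  shows "\<bar>g x / k\<bar> \<le> (T * K / \<beta>) * \<bar>x\<bar> + (T / (c * \<beta>)) * x\<^sup>2"
proof -
  have kb: "k\<^sup>2 + \<beta> > 0" using \<beta> by (simp add: add_nonneg_pos)
  have rk: "r / k = k / (k\<^sup>2 + \<beta>)"
  proof -
    have "r / k = (k * k) / ((k\<^sup>2 + \<beta>) * k)" unfolding r by (simp add: power2_eq_square)
    also have "\<dots> = k / (k\<^sup>2 + \<beta>)" using k by simp
    finally show ?thesis .
  qed
  have rk2: "k / (k\<^sup>2 + \<beta>) \<le> K / \<beta>"
  proof -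
    have "k * \<beta> \<le> K * \<beta>" using k \<beta> by simp
    also have "\<dots> \<le> K * (k\<^sup>2 + \<beta>)" using k by (simp add: algebra_simps)
    finally show ?thesis using kb \<beta> by (simp add: frac_le_eq field_simps)
  qed
  have nn: "0 \<le> (T * K / \<beta>) * \<bar>x\<bar>" "0 \<le> (T / (c * \<beta>)) * x\<^sup>2"
    using T c k \<beta> by auto
  have eq: "\<bar>g x / k\<bar> = \<bar>g x\<bar> / k" using k by simp
  show ?thesis
  proof (cases "T * \<bar>x\<bar> \<le> c * k / r")
    case True
    have "\<bar>g x\<bar> / k \<le> T * r * \<bar>x\<bar> / k" using hyp[OF True] k by (simp add: divide_right_mono)
    also have "\<dots> = T * \<bar>x\<bar> * (r / k)" by simp
    also have "\<dots> \<le> T * \<bar>x\<bar> * (K / \<beta>)" using rk rk2 T by (intro mult_left_mono) auto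
    also have "\<dots> = (T * K / \<beta>) * \<bar>x\<bar>" by simp
    finally have "\<bar>g x\<bar> / k \<le> (T * K / \<beta>) * \<bar>x\<bar>" .
    then show ?thesis using eq nn by linarith
  next
    case False
    have "c * k / r = c * (k\<^sup>2 + \<beta>) / k" unfolding r using k kb by (simp add: power2_eq_square field_simps)
    also have "\<dots> \<ge> c * \<beta> / k" using c k \<beta> by (intro divide_right_mono mult_left_mono) auto
    finally have h: "c * \<beta> / k < T * \<bar>x\<bar>" using False by simp
    then have h2: "1 / k < T * \<bar>x\<bar> / (c * \<beta>)" using c \<beta> k by (simp add: field_simps)
    have "\<bar>g x\<bar> / k \<le> \<bar>x\<bar> * (1 / k)" using gabs[of x] k by (simp add: divide_right_mono)
    also have "\<dots> \<le> \<bar>x\<bar> * (T * \<bar>x\<bar> / (c * \<beta>))" using h2 by (intro mult_left_mono) auto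
    also have "\<dots> = (T / (c * \<beta>)) * x\<^sup>2" by (simp add: power2_eq_square abs_mult_self_eq field_simps)
    finally have "\<bar>g x\<bar> / k \<le> (T / (c * \<beta>)) * x\<^sup>2" .
    then show ?thesis using eq nn by linarith
  qed
qed

lemma ident_iii:
  fixes u k \<beta> :: real
  assumes k: "k > 0" and \<beta>: "\<beta> > 0"
  defines "N \<equiv> k\<^sup>2 + \<beta>" and "E \<equiv> k\<^sup>2 * (k\<^sup>2 + 2 * \<beta>)"
  shows "((1 - k\<^sup>2 / N) * (u * N\<^sup>2 / E))\<^sup>2 / 2 - (u * N\<^sup>2 / E - u)\<^sup>2 / 2 = u\<^sup>2 * \<beta>\<^sup>2 / (2 * E)"
proof -
  have N0: "N > 0" unfolding N_def using \<beta> by (simp add: add_nonneg_pos)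
  have E0: "E > 0" unfolding E_def using k \<beta> by (simp add: add_nonneg_pos)
  have h1: "1 - k\<^sup>2 / N = \<beta> / N" using N0 unfolding N_def by (simp add: field_simps)
  have h2: "N\<^sup>2 - E = \<beta>\<^sup>2" unfolding N_def E_def by (simp add: power2_eq_square algebra_simps)
  have h3: "N\<^sup>2 - \<beta>\<^sup>2 = E" unfolding N_def E_def by (simp add: power2_eq_square algebra_simps)
  have a: "(1 - k\<^sup>2 / N) * (u * N\<^sup>2 / E) = u * \<beta> * N / E" unfolding h1 using N0
    by (simp add: power2_eq_square field_simps)
  have b: "u * N\<^sup>2 / E - u = u * \<beta>\<^sup>2 / E" using E0 h2
    by (simp add: field_simps)
  have "(u * \<beta> * N / E)\<^sup>2 - (u * \<beta>\<^sup>2 / E)\<^sup>2 = u\<^sup>2 * \<beta>\<^sup>2 * (N\<^sup>2 - \<beta>\<^sup>2) / E\<^sup>2"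
    using E0 by (simp add: power2_eq_square field_simps)
  also have "\<dots> = u\<^sup>2 * \<beta>\<^sup>2 / E" unfolding h3 using E0 by (simp add: power2_eq_square)
  finally show ?thesis unfolding a b by (simp add: field_simps)
qed

lemma (in proxs) s_lower_small:
  assumes aT: "aT > 0" and nfP: "nf (P aT)" and k: "k > 0" "k \<le> K" and c: "c > 0" and \<beta>: "\<beta> > 0"
    and A2: "\<And>x. \<bar>x\<bar> \<le> c * k / (k\<^sup>2 / (k\<^sup>2 + \<beta>)) \<Longrightarrow> \<bar>P aT x\<bar> \<le> k\<^sup>2 / (k\<^sup>2 + \<beta>) * \<bar>x\<bar>"
    and u: "\<bar>u\<bar> \<le> c * k"
  shows "ereal (\<beta>\<^sup>2 / (2 * aT * (K\<^sup>2 + 2 * \<beta>)) * u\<^sup>2 / k\<^sup>2) \<le> s u"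
proof -
  define N where "N = k\<^sup>2 + \<beta>"
  define E where "E = k\<^sup>2 * (k\<^sup>2 + 2 * \<beta>)"
  define r where "r = k\<^sup>2 / N"
  define x where "x = u * N\<^sup>2 / E"
  define p where "p = P aT x"
  have N0: "N > 0" unfolding N_def using \<beta> by (simp add: add_nonneg_pos)
  have E0: "E > 0" unfolding E_def using k \<beta> by (simp add: add_nonneg_pos)
  have k2: "k\<^sup>2 > 0" using k by simp
  have r0: "0 < r" "r \<le> 1"
  proof -
    show "0 < r" unfolding r_def using k2 N0 by (rule divide_pos_pos)
    have "k\<^sup>2 \<le> N" unfolding N_def using \<beta> by simp
    then show "r \<le> 1" unfolding r_def using N0 by simp
  qed
  have ckr: "c * k / r = c * N / k" unfolding r_def using k N0 by (simp add: power2_eq_square field_simps)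
  have NE: "N\<^sup>2 / E \<le> N / k\<^sup>2"
  proof -
    have "k\<^sup>2 * N \<le> E" unfolding E_def N_def using \<beta> k2 by (simp add: algebra_simps)
    then have "N * (k\<^sup>2 * N) \<le> N * E" using N0 by (intro mult_left_mono) auto
    then show ?thesis using E0 k2 by (simp add: field_simps power2_eq_square)
  qed
  have hx: "\<bar>x\<bar> \<le> c * k / r"
  proof -
    have "\<bar>x\<bar> = \<bar>u\<bar> * (N\<^sup>2 / E)" unfolding x_def using E0 by (simp add: abs_mult)
    also have "\<dots> \<le> (c * k) * (N / k\<^sup>2)" using u NE N0 E0 by (intro mult_mono) auto
    also have "\<dots> = c * N / k" using k by (simp add: power2_eq_square field_simps)
    finally show ?thesis using ckr by simp
  qed
  have pb: "\<bar>p\<bar> \<le> r * \<bar>x\<bar>" unfolding p_def using A2[of x] hx unfolding r_def N_def by simp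
  have sg: "(0 \<le> p \<and> p \<le> x) \<or> (x \<le> p \<and> p \<le> 0)" unfolding p_def by (rule nf_sign[OF nfP])
  have xp: "((1 - r) * x)\<^sup>2 \<le> (x - p)\<^sup>2"
  proof -
    have e1: "(1 - r) * x = x - r * x" by (simp add: algebra_simps)
    have "\<bar>(1 - r) * x\<bar> \<le> \<bar>x - p\<bar>"
    proof (cases "0 \<le> p \<and> p \<le> x")
      case True
      then have "0 \<le> x" by simp
      then have "r * x \<le> x" using r0 by (intro mult_left_le_one_le) auto
      moreover have "p \<le> r * x" using pb True by simp
      ultimately show ?thesis unfolding e1 using True by simp
    next
      case False
      then have F: "x \<le> p" "p \<le> 0" using sg by auto
      then have "x \<le> 0" by simp
      then have "r * (-x) \<le> -x" using r0 by (intro mult_left_le_one_le) auto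
      moreover have "-p \<le> r * (-x)" using pb F \<open>x \<le> 0\<close> by simp
      ultimately show ?thesis unfolding e1 using F by simp
    qed
    then show ?thesis by (simp add: abs_le_square_iff)
  qed
  have op: "ereal ((x - p)\<^sup>2 / 2) + ereal aT * s p \<le> ereal ((x - u)\<^sup>2 / 2) + ereal aT * s u"
    unfolding p_def by (rule opt[OF aT])
  have id: "((1 - r) * x)\<^sup>2 / 2 - (x - u)\<^sup>2 / 2 = u\<^sup>2 * \<beta>\<^sup>2 / (2 * E)"
    unfolding r_def x_def N_def E_def by (rule ident_iii[OF k(1) \<beta>])
  have bnd: "\<beta>\<^sup>2 / (2 * aT * (K\<^sup>2 + 2 * \<beta>)) * u\<^sup>2 / k\<^sup>2 \<le> u\<^sup>2 * \<beta>\<^sup>2 / (2 * E) / aT"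
  proof -
    have "k\<^sup>2 \<le> K\<^sup>2" using k by (intro power_mono) auto
    then have "E \<le> k\<^sup>2 * (K\<^sup>2 + 2 * \<beta>)" unfolding E_def using k2 by (intro mult_left_mono) auto
    then have "u\<^sup>2 * \<beta>\<^sup>2 / (2 * (k\<^sup>2 * (K\<^sup>2 + 2 * \<beta>))) / aT \<le> u\<^sup>2 * \<beta>\<^sup>2 / (2 * E) / aT"
      using E0 aT by (intro divide_right_mono divide_left_mono mult_left_mono) auto
    moreover have "\<beta>\<^sup>2 / (2 * aT * (K\<^sup>2 + 2 * \<beta>)) * u\<^sup>2 / k\<^sup>2 = u\<^sup>2 * \<beta>\<^sup>2 / (2 * (k\<^sup>2 * (K\<^sup>2 + 2 * \<beta>))) / aT"
      by (simp add: field_simps)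
    ultimately show ?thesis by simp
  qed
  show ?thesis
  proof (cases "s u = \<infinity>")
    case True then show ?thesis by simp
  next
    case False
    moreover have "s u \<ge> 0" by (rule snn)
    ultimately obtain v where v: "s u = ereal v" by (cases "s u") auto
    have "s p \<ge> 0" by (rule snn)
    then obtain w where w: "s p = ereal w" "w \<ge> 0"
      using op v aT by (cases "s p") auto
    have "(x - p)\<^sup>2 / 2 + aT * w \<le> (x - u)\<^sup>2 / 2 + aT * v" using op v w by simp
    then have "((1 - r) * x)\<^sup>2 / 2 - (x - u)\<^sup>2 / 2 \<le> aT * v"
      using xp w aT mult_nonneg_nonneg[of aT w] by argo
    then have hh: "u\<^sup>2 * \<beta>\<^sup>2 / (2 * E) \<le> v * aT" using id by (simp add: mult.commute)
    have "u\<^sup>2 * \<beta>\<^sup>2 / (2 * E) / aT \<le> v" by (simp only: pos_divide_le_eq[OF aT] hh)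
    then show ?thesis using bnd v by simp
  qed
qed

lemma (in proxs) s_lower_large:
  assumes aT: "aT > 0" and nfP: "nf (P aT)" and k: "k > 0" "k \<le> K" and c: "c > 0" and \<beta>: "\<beta> > 0"
    and A2: "\<And>x. \<bar>x\<bar> \<le> c * k / (k\<^sup>2 / (k\<^sup>2 + \<beta>)) \<Longrightarrow> \<bar>P aT x\<bar> \<le> k\<^sup>2 / (k\<^sup>2 + \<beta>) * \<bar>x\<bar>"
    and D: "D = \<beta>\<^sup>2 / (2 * aT * (K\<^sup>2 + 2 * \<beta>))"
    and u: "c * k \<le> \<bar>u\<bar>"
  shows "ereal (D * c * \<bar>u\<bar> / k) \<le> s u"
proof -
  have ck: "c * k > 0" using c k by simp
  then have u0: "\<bar>u\<bar> > 0" using u by linarith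
  define t where "t = c * k / \<bar>u\<bar>"
  have t: "0 < t" "t \<le> 1" unfolding t_def using ck u0 u by auto
  have tu: "\<bar>t * u\<bar> = c * k" unfolding t_def using u0 ck c k by (simp add: abs_mult)
  have "ereal (D * (t * u)\<^sup>2 / k\<^sup>2) \<le> s (t * u)"
    unfolding D by (rule s_lower_small[OF aT nfP k c \<beta> A2]) (use tu in auto)
  moreover have "(t * u)\<^sup>2 = (c * k)\<^sup>2" using tu by (metis power2_abs)
  ultimately have h1: "ereal (D * c\<^sup>2) \<le> s (t * u)" using k by (simp add: power_mult_distrib)
  have "s (t * u + (1 - t) * 0) \<le> ereal t * s u + ereal (1 - t) * s 0"
    by (rule cv[unfolded convex_fun_def, rule_format]) (use t in auto)
  then have h2: "s (t * u) \<le> ereal t * s u" using s0 by simp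
  show ?thesis
  proof (cases "s u = \<infinity>")
    case True then show ?thesis by simp
  next
    case False
    moreover have "s u \<ge> 0" by (rule snn)
    ultimately obtain v where v: "s u = ereal v" by (cases "s u") auto
    have "D * c\<^sup>2 \<le> t * v" using h1 h2 v by (metis order_trans times_ereal.simps(1) ereal_less_eq(3))
    then have "D * c\<^sup>2 / t \<le> v" using t by (simp add: pos_divide_le_eq mult.commute)
    moreover have "D * c\<^sup>2 / t = D * c * \<bar>u\<bar> / k" unfolding t_def using c k u0
      by (simp add: power2_eq_square field_simps)
    ultimately show ?thesis using v by simp
  qed
qed

lemma (in proxs) sq_bound:
  assumes aT: "aT > 0" and nfP: "nf (P aT)" and k: "k > 0" "k \<le> K" and c: "c > 0" and \<beta>: "\<beta> > 0"
    and A2: "\<And>x. \<bar>x\<bar> \<le> c * k / (k\<^sup>2 / (k\<^sup>2 + \<beta>)) \<Longrightarrow> \<bar>P aT x\<bar> \<le> k\<^sup>2 / (k\<^sup>2 + \<beta>) * \<bar>x\<bar>"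
    and D: "D = \<beta>\<^sup>2 / (2 * aT * (K\<^sup>2 + 2 * \<beta>))"
    and su: "s u = ereal \<sigma>"
  shows "(u / k)\<^sup>2 \<le> \<sigma> / D + (\<sigma> / (D * c))\<^sup>2"
proof -
  have K: "K > 0" using k by simp
  have D0: "D > 0" unfolding D using \<beta> aT K by (intro divide_pos_pos mult_pos_pos) (auto intro: add_pos_pos)
  have s0': "\<sigma> \<ge> 0" using snn[of u] su by simp
  have nn: "0 \<le> \<sigma> / D" "0 \<le> (\<sigma> / (D * c))\<^sup>2" using s0' D0 by auto
  show ?thesis
  proof (cases "\<bar>u\<bar> \<le> c * k")
    case True
    have "ereal (D * u\<^sup>2 / k\<^sup>2) \<le> s u"
      unfolding D by (rule s_lower_small[OF aT nfP k c \<beta> A2 True])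
    then have "D * u\<^sup>2 / k\<^sup>2 \<le> \<sigma>" using su by simp
    then have "D * (u / k)\<^sup>2 \<le> \<sigma>" by (simp add: power_divide)
    then have "(u / k)\<^sup>2 \<le> \<sigma> / D" using D0 by (simp add: pos_le_divide_eq mult.commute)
    then show ?thesis using nn by linarith
  next
    case nb: False
    have nb': "c * k \<le> \<bar>u\<bar>" using nb by linarith
    have "ereal (D * c * \<bar>u\<bar> / k) \<le> s u"
      by (rule s_lower_large[OF aT nfP k c \<beta> A2 D nb'])
    then have "D * c * \<bar>u\<bar> / k \<le> \<sigma>" using su by simp
    then have "(D * c) * \<bar>u / k\<bar> \<le> \<sigma>" using k by simp
    then have h: "\<bar>u / k\<bar> \<le> \<sigma> / (D * c)" using D0 c by (simp add: pos_le_divide_eq mult.commute)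
    have "(u / k)\<^sup>2 = \<bar>u / k\<bar>\<^sup>2" by (rule power2_abs[symmetric])
    also have "\<dots> \<le> (\<sigma> / (D * c))\<^sup>2" using h by (intro power_mono) auto
    finally show ?thesis using nn by linarith
  qed
qed

definition nsq :: "('i \<Rightarrow> real) \<Rightarrow> real" where
  "nsq x = (\<Sum>\<^sub>\<infinity>i. (x i)\<^sup>2)"

lemma l2_summable: "x \<in> l2 \<Longrightarrow> (\<lambda>i. (x i)\<^sup>2) summable_on UNIV"
  unfolding l2_def by simp

lemma nsq_nonneg: "0 \<le> nsq x"
  unfolding nsq_def by (rule infsum_nonneg) simp

lemma l2norm_nsq: "l2norm x = sqrt (nsq x)"
  unfolding l2norm_def nsq_def by simp

lemma l2_comp:
  assumes "x \<in> l2" "\<And>i. (y i)\<^sup>2 \<le> C * (x i)\<^sup>2"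
  shows "y \<in> l2"
proof -
  have "(\<lambda>i. (x i)\<^sup>2 * C) summable_on UNIV" using l2_summable[OF assms(1)] by (rule summable_on_cmult_left)
  then show ?thesis unfolding l2_def mem_Collect_eq
    by (rule summable_on_comparison_test) (use assms(2) in \<open>auto simp: mult.commute\<close>)
qed

lemma split_sum:
  fixes f :: "'i \<Rightarrow> real"
  assumes "f summable_on UNIV" "finite F"
  shows "infsum f UNIV = sum f F + infsum f (- F)"
proof -
  have "infsum f (F \<union> - F) = infsum f F + infsum f (- F)"
    by (rule infsum_Un_disjoint) (use assms in \<open>auto intro: summable_on_subset_banach summable_on_finite\<close>)
  then show ?thesis using assms(2) by (simp add: infsum_finite)
qed

lemma tail_small:
  fixes h :: "'i \<Rightarrow> real"
  assumes "h summable_on UNIV" "\<And>i. 0 \<le> h i" "e > 0"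
  shows "\<exists>F. finite F \<and> infsum h (- F) \<le> e"
proof -
  obtain F where F: "finite F" "dist (sum h F) (infsum h UNIV) \<le> e"
    using infsum_finite_approximation[OF assms(1) assms(3)] by blast
  have "infsum h UNIV = sum h F + infsum h (- F)" by (rule split_sum[OF assms(1) F(1)])
  then have "infsum h (- F) \<le> e" using F(2) by (simp add: dist_real_def abs_le_iff)
  then show ?thesis using F(1) by blast
qed

lemma comp_le_nsq:
  assumes "x \<in> l2" shows "(x i)\<^sup>2 \<le> nsq x"
proof -
  have "sum (\<lambda>i. (x i)\<^sup>2) {i} \<le> infsum (\<lambda>i. (x i)\<^sup>2) UNIV"
    by (rule finite_sum_le_infsum) (use l2_summable[OF assms] in auto)
  then show ?thesis unfolding nsq_def by simp
qed

lemma comp_le_l2norm: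
  assumes "x \<in> l2" shows "\<bar>x i\<bar> \<le> l2norm x"
  unfolding l2norm_nsq using comp_le_nsq[OF assms, of i] by (simp add: real_le_rsqrt)

lemma nsq_mono:
  assumes "x \<in> l2" "\<And>i. (y i)\<^sup>2 \<le> (x i)\<^sup>2"
  shows "nsq y \<le> nsq x"
  unfolding nsq_def using l2_comp[of x y 1] assms
  by (intro infsum_mono) (auto simp: l2_summable)

lemma l2_diff:
  assumes "x \<in> l2" "y \<in> l2"
  shows "(\<lambda>i. x i - y i) \<in> l2" "nsq (\<lambda>i. x i - y i) \<le> 2 * nsq x + 2 * nsq y"
proof -
  have b: "(x i - y i)\<^sup>2 \<le> 2 * (x i)\<^sup>2 + 2 * (y i)\<^sup>2" for i
    using zero_le_power2[of "x i + y i"] by (simp add: power2_eq_square algebra_simps)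
  have s: "(\<lambda>i. 2 * (x i)\<^sup>2 + 2 * (y i)\<^sup>2) summable_on UNIV"
    using l2_summable[OF assms(1)] l2_summable[OF assms(2)]
    by (intro summable_on_add summable_on_cmult_right)
  show l: "(\<lambda>i. x i - y i) \<in> l2" unfolding l2_def mem_Collect_eq
    by (rule summable_on_comparison_test[OF s]) (use b in auto)
  have "nsq (\<lambda>i. x i - y i) \<le> (\<Sum>\<^sub>\<infinity>i. 2 * (x i)\<^sup>2 + 2 * (y i)\<^sup>2)"
    unfolding nsq_def by (rule infsum_mono) (use l s b in \<open>auto simp: l2_def\<close>)
  also have "\<dots> = 2 * nsq x + 2 * nsq y" unfolding nsq_def
    using l2_summable[OF assms(1)] l2_summable[OF assms(2)]
    by (simp add: infsum_add summable_on_cmult_right infsum_cmult_right)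
  finally show "nsq (\<lambda>i. x i - y i) \<le> 2 * nsq x + 2 * nsq y" .
qed

lemma l2_add:
  assumes "x \<in> l2" "y \<in> l2"
  shows "(\<lambda>i. x i + y i) \<in> l2"
proof -
  have "(\<lambda>i. - y i) \<in> l2" using assms(2) by (simp add: l2_def)
  from l2_diff(1)[OF assms(1) this] show ?thesis by simp
qed

lemma l2_prod_summable:
  assumes "x \<in> l2" "y \<in> l2"
  shows "(\<lambda>i. x i * y i) summable_on A"
proof -
  have s0: "(\<lambda>i. ((x i)\<^sup>2 + (y i)\<^sup>2) * (1/2)) summable_on UNIV"
    using l2_summable[OF assms(1)] l2_summable[OF assms(2)]
    by (intro summable_on_add summable_on_cmult_left)
  have s: "(\<lambda>i. ((x i)\<^sup>2 + (y i)\<^sup>2) / 2) summable_on UNIV" using s0 by simp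
  have b: "norm (x i * y i) \<le> ((x i)\<^sup>2 + (y i)\<^sup>2) / 2" for i
  proof -
    have "0 \<le> (\<bar>x i\<bar> - \<bar>y i\<bar>)\<^sup>2" by simp
    then show ?thesis by (simp add: power2_eq_square algebra_simps abs_mult)
  qed
  have "(\<lambda>i. x i * y i) summable_on UNIV"
    by (rule abs_summable_summable, rule Infinite_Sum.abs_summable_on_comparison_test'[OF s]) (use b in auto)
  then show ?thesis by (rule summable_on_subset_banach) simp
qed

lemma tri3: fixes A a b c e :: real assumes "A = a + b - c" "\<bar>a\<bar> < e/3" "\<bar>b\<bar> \<le> e/3" "\<bar>c\<bar> \<le> e/3"
  shows "norm A < e"
proof -
  have "\<bar>A\<bar> \<le> \<bar>a\<bar> + \<bar>b\<bar> + \<bar>c\<bar>" unfolding assms(1) by (simp add: abs_triangle_ineq4 abs_triangle_ineq order_trans)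
  then show ?thesis using assms(2-4) by simp
qed

lemma tailbnd: fixes S T B \<eta> :: real assumes "S \<le> B" "T / \<eta> \<le> \<eta>" "\<eta> > 0"
  shows "(\<eta> * S + T / \<eta>) / 2 \<le> (\<eta> * B + \<eta>) / 2"
proof -
  have "\<eta> * S \<le> \<eta> * B" using assms by simp
  then have "\<eta> * S + T / \<eta> \<le> \<eta> * B + \<eta>" using assms(2) by (rule add_mono)
  then show ?thesis by (rule divide_right_mono) simp
qed

lemma conv_sum:
  fixes f :: "nat \<Rightarrow> 'i \<Rightarrow> real" and g :: "'i \<Rightarrow> real"
  assumes sf: "\<And>k. f k summable_on UNIV" and sg: "g summable_on UNIV"
    and pw: "\<And>i. (\<lambda>k. f k i) \<longlonglongrightarrow> g i"
    and tail: "\<And>e. e > 0 \<Longrightarrow> \<exists>F N. finite F \<and> (\<forall>k\<ge>N. \<bar>infsum (f k) (- F)\<bar> \<le> e) \<and> \<bar>infsum g (- F)\<bar> \<le> e"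
  shows "(\<lambda>k. infsum (f k) UNIV) \<longlonglongrightarrow> infsum g UNIV"
proof (rule LIMSEQ_I)
  fix e :: real assume e: "e > 0"
  then obtain F N where F: "finite F" and N: "\<And>k. k \<ge> N \<Longrightarrow> \<bar>infsum (f k) (- F)\<bar> \<le> e / 3"
    and G: "\<bar>infsum g (- F)\<bar> \<le> e / 3"
    using tail[of "e / 3"] by auto
  have "(\<lambda>k. sum (f k) F) \<longlonglongrightarrow> sum g F" by (intro tendsto_sum pw)
  then obtain N2 where N2: "\<And>k. k \<ge> N2 \<Longrightarrow> norm (sum (f k) F - sum g F) < e / 3"
    using LIMSEQ_D[of _ "sum g F" "e / 3"] e by force
  show "\<exists>N. \<forall>k\<ge>N. norm (infsum (f k) UNIV - infsum g UNIV) < e"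
  proof (intro exI allI impI)
    fix k assume k: "max N N2 \<le> k"
    have "infsum (f k) UNIV - infsum g UNIV
          = (sum (f k) F - sum g F) + infsum (f k) (- F) - infsum g (- F)"
      using split_sum[OF sf F, of k] split_sum[OF sg F] by simp
    moreover have "\<bar>sum (f k) F - sum g F\<bar> < e / 3" using N2[of k] k by simp
    moreover have "\<bar>infsum (f k) (- F)\<bar> \<le> e / 3" using N[of k] k by simp
    ultimately show "norm (infsum (f k) UNIV - infsum g UNIV) < e" using G
      by (rule tri3)
  qed
qed

lemma tail_prod:
  fixes x y :: "'i \<Rightarrow> real"
  assumes x: "x \<in> l2" and y: "y \<in> l2" and \<eta>: "\<eta> > 0"
    and ty: "infsum (\<lambda>i. (y i)\<^sup>2) (- F) \<le> \<eta>\<^sup>2" and B: "nsq x \<le> B"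
  shows "\<bar>infsum (\<lambda>i. x i * y i) (- F)\<bar> \<le> \<eta> * (B + 1) / 2"
proof -
  define g where "g i = (\<eta> * (x i)\<^sup>2 + (y i)\<^sup>2 / \<eta>) / 2" for i
  have gb: "\<bar>x i * y i\<bar> \<le> g i" for i
  proof -
    have "0 \<le> (\<eta> * \<bar>x i\<bar> - \<bar>y i\<bar>)\<^sup>2" by simp
    then have "2 * \<eta> * \<bar>x i * y i\<bar> \<le> \<eta>\<^sup>2 * (x i)\<^sup>2 + (y i)\<^sup>2"
      by (simp add: power2_eq_square algebra_simps abs_mult)
    then have "\<bar>x i * y i\<bar> \<le> (\<eta>\<^sup>2 * (x i)\<^sup>2 + (y i)\<^sup>2) / (2 * \<eta>)"
      using \<eta> by (simp add: pos_le_divide_eq mult.commute mult.left_commute)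
    also have "\<dots> = g i" unfolding g_def using \<eta> by (simp add: power2_eq_square field_simps)
    finally show ?thesis .
  qed
  have sx: "(\<lambda>i. (x i)\<^sup>2) summable_on - F" using l2_summable[OF x] by (rule summable_on_subset_banach) simp
  have sy: "(\<lambda>i. (y i)\<^sup>2) summable_on - F" using l2_summable[OF y] by (rule summable_on_subset_banach) simp
  have sg: "g summable_on - F" unfolding g_def
  proof -
    have "(\<lambda>i. (\<eta> * (x i)\<^sup>2 + (y i)\<^sup>2 * (1 / \<eta>)) * (1/2)) summable_on - F"
      using sx sy by (intro summable_on_add summable_on_cmult_left summable_on_cmult_right)
    then show "(\<lambda>i. (\<eta> * (x i)\<^sup>2 + (y i)\<^sup>2 / \<eta>) / 2) summable_on - F" by simp
  qed
  have sxy: "(\<lambda>i. x i * y i) summable_on - F" by (rule l2_prod_summable[OF x y])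
  have ig: "infsum g (- F) = (\<eta> * infsum (\<lambda>i. (x i)\<^sup>2) (- F) + infsum (\<lambda>i. (y i)\<^sup>2) (- F) / \<eta>) / 2"
  proof -
    have "infsum g (- F) = (\<Sum>\<^sub>\<infinity>i\<in>- F. (\<eta> * (x i)\<^sup>2 + (y i)\<^sup>2 * (1 / \<eta>)) * (1/2))"
      unfolding g_def by simp
    also have "\<dots> = (\<Sum>\<^sub>\<infinity>i\<in>- F. \<eta> * (x i)\<^sup>2 + (y i)\<^sup>2 * (1 / \<eta>)) * (1/2)"
      by (rule infsum_cmult_left')
    also have "(\<Sum>\<^sub>\<infinity>i\<in>- F. \<eta> * (x i)\<^sup>2 + (y i)\<^sup>2 * (1 / \<eta>))
        = \<eta> * infsum (\<lambda>i. (x i)\<^sup>2) (- F) + infsum (\<lambda>i. (y i)\<^sup>2) (- F) * (1 / \<eta>)"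
    proof -
      have "(\<Sum>\<^sub>\<infinity>i\<in>- F. \<eta> * (x i)\<^sup>2 + (y i)\<^sup>2 * (1 / \<eta>))
         = (\<Sum>\<^sub>\<infinity>i\<in>- F. \<eta> * (x i)\<^sup>2) + (\<Sum>\<^sub>\<infinity>i\<in>- F. (y i)\<^sup>2 * (1 / \<eta>))"
        by (rule infsum_add[OF summable_on_cmult_right[OF sx] summable_on_cmult_left[OF sy]])
      also have "(\<Sum>\<^sub>\<infinity>i\<in>- F. \<eta> * (x i)\<^sup>2) = \<eta> * infsum (\<lambda>i. (x i)\<^sup>2) (- F)"
        by (rule infsum_cmult_right')
      also have "(\<Sum>\<^sub>\<infinity>i\<in>- F. (y i)\<^sup>2 * (1 / \<eta>)) = infsum (\<lambda>i. (y i)\<^sup>2) (- F) * (1 / \<eta>)"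
        by (rule infsum_cmult_left')
      finally show ?thesis .
    qed
    finally show ?thesis by simp
  qed
  have "infsum (\<lambda>i. (x i)\<^sup>2) (- F) \<le> infsum (\<lambda>i. (x i)\<^sup>2) UNIV"
    by (rule infsum_mono2) (use sx l2_summable[OF x] in auto)
  then have t1: "infsum (\<lambda>i. (x i)\<^sup>2) (- F) \<le> B" using B unfolding nsq_def by simp
  have t2: "infsum (\<lambda>i. (y i)\<^sup>2) (- F) / \<eta> \<le> \<eta>" using ty \<eta> by (simp add: divide_le_eq power2_eq_square)
  have "infsum g (- F) \<le> (\<eta> * B + \<eta>) / 2"
    unfolding ig using t1 t2 \<eta> by (rule tailbnd)
  also have "\<dots> = \<eta> * (B + 1) / 2" by (simp add: algebra_simps)
  finally have up: "infsum g (- F) \<le> \<eta> * (B + 1) / 2" .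
  have "infsum (\<lambda>i. x i * y i) (- F) \<le> infsum g (- F)"
    by (rule infsum_mono[OF sxy sg]) (use gb in \<open>auto simp: abs_le_iff\<close>)
  moreover have "- infsum g (- F) \<le> infsum (\<lambda>i. x i * y i) (- F)"
  proof -
    have "infsum (\<lambda>i. - g i) (- F) \<le> infsum (\<lambda>i. x i * y i) (- F)"
    proof (rule infsum_mono[OF _ sxy])
      show "(\<lambda>i. - g i) summable_on - F" using sg by (simp add: summable_on_uminus)
      show "- g i \<le> x i * y i" for i using gb[of i] by linarith
    qed
    then show ?thesis by (simp add: infsum_uminus)
  qed
  ultimately show ?thesis using up by (simp add: abs_le_iff)
qed

lemma weak_conv_crit:
  fixes X :: "nat \<Rightarrow> 'i \<Rightarrow> real"
  assumes X: "\<And>k. X k \<in> l2" and c: "c \<in> l2" and B: "\<And>k. nsq (X k) \<le> B"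
    and pw: "\<And>i. (\<lambda>k. X k i) \<longlonglongrightarrow> c i"
  shows "weak_conv_l2 X c"
  unfolding weak_conv_l2_def
proof (intro conjI ballI allI X c)
  fix y :: "'i \<Rightarrow> real" assume y: "y \<in> l2"
  show "(\<lambda>k. \<Sum>\<^sub>\<infinity>i. X k i * y i) \<longlonglongrightarrow> (\<Sum>\<^sub>\<infinity>i. c i * y i)"
  proof (rule conv_sum)
    show "(\<lambda>i. X k i * y i) summable_on UNIV" for k by (rule l2_prod_summable[OF X y])
    show "(\<lambda>i. c i * y i) summable_on UNIV" by (rule l2_prod_summable[OF c y])
    show "(\<lambda>k. X k i * y i) \<longlonglongrightarrow> c i * y i" for i by (intro tendsto_intros pw)
  next
    fix e :: real assume e: "e > 0"
    define B0 where "B0 = max B (nsq c)"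
    have B0: "B0 \<ge> 0" unfolding B0_def using nsq_nonneg[of c] by linarith
    define \<eta> where "\<eta> = e / (B0 + 1)"
    have \<eta>: "\<eta> > 0" unfolding \<eta>_def using e B0 by simp
    have \<eta>e: "\<eta> * (B0 + 1) / 2 \<le> e" unfolding \<eta>_def using e B0 by simp
    obtain F where F: "finite F" "infsum (\<lambda>i. (y i)\<^sup>2) (- F) \<le> \<eta>\<^sup>2"
      using tail_small[OF l2_summable[OF y], of "\<eta>\<^sup>2"] \<eta> by auto
    have t1: "\<bar>infsum (\<lambda>i. X k i * y i) (- F)\<bar> \<le> e" for k
    proof -
      have "nsq (X k) \<le> B0" using B[of k] unfolding B0_def by simp
      from tail_prod[OF X y \<eta> F(2) this] show ?thesis using \<eta>e by simp
    qed
    have t2: "\<bar>infsum (\<lambda>i. c i * y i) (- F)\<bar> \<le> e"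
    proof -
      have "nsq c \<le> B0" unfolding B0_def by simp
      from tail_prod[OF c y \<eta> F(2) this] show ?thesis using \<eta>e by simp
    qed
    show "\<exists>F N. finite F \<and> (\<forall>k\<ge>N. \<bar>infsum (\<lambda>i. X k i * y i) (- F)\<bar> \<le> e)
            \<and> \<bar>infsum (\<lambda>i. c i * y i) (- F)\<bar> \<le> e"
      using F(1) t1 t2 by blast
  qed
qed

lemma ereal_infsum:
  fixes f :: "'i \<Rightarrow> real"
  assumes "f summable_on A"
  shows "infsum (\<lambda>i. ereal (f i)) A = ereal (infsum f A)"
proof -
  have "ereal (infsum f A) = infsum (ereal \<circ> f) A"
    by (simp add: infsum_comm_additive_general assms)
  then show ?thesis by (simp add: o_def)
qed

lemma nsq_le_C:
  assumes x: "x \<in> l2" and b: "\<And>i. (y i)\<^sup>2 \<le> C * (x i)\<^sup>2"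
  shows "nsq y \<le> C * nsq x"
proof -
  have y: "y \<in> l2" by (rule l2_comp[OF x b])
  have "nsq y \<le> (\<Sum>\<^sub>\<infinity>i. C * (x i)\<^sup>2)" unfolding nsq_def
    by (rule infsum_mono) (use l2_summable[OF x] l2_summable[OF y] b in \<open>auto intro: summable_on_cmult_right\<close>)
  also have "\<dots> = C * nsq x" unfolding nsq_def by (rule infsum_cmult_right')
  finally show ?thesis .
qed

lemma dom_sum:
  fixes f :: "'i \<Rightarrow> real"
  assumes x: "x \<in> l2" and f0: "\<And>i. 0 \<le> f i" and fb: "\<And>i. f i \<le> C * (x i)\<^sup>2"
  shows "f summable_on A" "infsum f A \<le> C * infsum (\<lambda>i. (x i)\<^sup>2) A"
proof -
  have sx: "(\<lambda>i. (x i)\<^sup>2) summable_on A" using l2_summable[OF x] by (rule summable_on_subset_banach) simp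
  have sC: "(\<lambda>i. C * (x i)\<^sup>2) summable_on A" using sx by (rule summable_on_cmult_right)
  show sf: "f summable_on A" by (rule summable_on_comparison_test[OF sC]) (use f0 fb in auto)
  have "infsum f A \<le> (\<Sum>\<^sub>\<infinity>i\<in>A. C * (x i)\<^sup>2)" by (rule infsum_mono[OF sf sC]) (use fb in auto)
  also have "\<dots> = C * infsum (\<lambda>i. (x i)\<^sup>2) A" by (rule infsum_cmult_right')
  finally show "infsum f A \<le> C * infsum (\<lambda>i. (x i)\<^sup>2) A" .
qed

lemma sq_sum:
  fixes f :: "'i \<Rightarrow> real"
  assumes s: "f summable_on UNIV" and f0: "\<And>i. 0 \<le> f i"
  shows "(\<lambda>i. (f i)\<^sup>2) summable_on UNIV" "infsum (\<lambda>i. (f i)\<^sup>2) UNIV \<le> (infsum f UNIV)\<^sup>2"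
proof -
  define S where "S = infsum f UNIV"
  have fS: "f i \<le> S" for i
  proof -
    have "sum f {i} \<le> infsum f UNIV" by (rule finite_sum_le_infsum) (use s f0 in auto)
    then show ?thesis unfolding S_def by simp
  qed
  have b: "(f i)\<^sup>2 \<le> f i * S" for i
    unfolding power2_eq_square using fS f0 by (intro mult_left_mono) auto
  have sS: "(\<lambda>i. f i * S) summable_on UNIV" using s by (rule summable_on_cmult_left)
  show ss: "(\<lambda>i. (f i)\<^sup>2) summable_on UNIV" by (rule summable_on_comparison_test[OF sS]) (use b in auto)
  have "infsum (\<lambda>i. (f i)\<^sup>2) UNIV \<le> (\<Sum>\<^sub>\<infinity>i. f i * S)" by (rule infsum_mono[OF ss sS]) (use b in auto)
  also have "\<dots> = S * S" unfolding S_def by (rule infsum_cmult_left')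
  finally show "infsum (\<lambda>i. (f i)\<^sup>2) UNIV \<le> (infsum f UNIV)\<^sup>2" unfolding S_def by (simp add: power2_eq_square)
qed

lemma nsq_tri:
  assumes x: "x \<in> l2" and y: "y \<in> l2" and b: "\<And>i. (w i)\<^sup>2 \<le> 2 * (x i)\<^sup>2 + 2 * (y i)\<^sup>2"
  shows "nsq w \<le> 2 * nsq x + 2 * nsq y"
proof -
  have s: "(\<lambda>i. 2 * (x i)\<^sup>2 + 2 * (y i)\<^sup>2) summable_on UNIV"
    using l2_summable[OF x] l2_summable[OF y] by (intro summable_on_add summable_on_cmult_right)
  have sw: "(\<lambda>i. (w i)\<^sup>2) summable_on UNIV" by (rule summable_on_comparison_test[OF s]) (use b in auto)
  have "nsq w \<le> (\<Sum>\<^sub>\<infinity>i. 2 * (x i)\<^sup>2 + 2 * (y i)\<^sup>2)" unfolding nsq_def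
    by (rule infsum_mono[OF sw s]) (use b in auto)
  also have "\<dots> = 2 * nsq x + 2 * nsq y" unfolding nsq_def
    using l2_summable[OF x] l2_summable[OF y]
    by (simp add: infsum_add summable_on_cmult_right infsum_cmult_right)
  finally show ?thesis .
qed

lemma sq_le_2: "((a::real) + b)\<^sup>2 \<le> 2 * a\<^sup>2 + 2 * b\<^sup>2"
  using zero_le_power2[of "a - b"] by (simp add: power2_eq_square algebra_simps)

locale setting =
  fixes \<phi> :: "real \<Rightarrow> real \<Rightarrow> real \<Rightarrow> real"
    and \<kappa> :: "'i::countable \<Rightarrow> real"
    and s :: "'i \<Rightarrow> real \<Rightarrow> ereal"
  assumes filt: "nonlin_reg_filter \<phi>"
    and A: "assumptionA \<phi>"
    and kpos: "\<And>i. \<kappa> i > 0"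
    and kbdd: "bdd_above (range \<kappa>)"
    and s_proper: "\<And>i. proper_fun (s i)"
    and s_convex: "\<And>i. convex_fun (s i)"
    and s_lsc: "\<And>i. lsc_fun (s i)"
    and s0: "\<And>i. s i 0 = 0"
    and s_prox: "\<And>i a. a > 0 \<Longrightarrow> \<phi> a (\<kappa> i) = prox (\<lambda>y. ereal a * s i y)"
begin

lemma nfphi: "a > 0 \<Longrightarrow> k > 0 \<Longrightarrow> nf (\<phi> a k)"
  using filt unfolding nonlin_reg_filter_def nf_def by blast

lemma PX: "proxs (s i) (\<lambda>a. \<phi> a (\<kappa> i))"
proof
  show "proper_fun (s i)" "convex_fun (s i)" "lsc_fun (s i)" "s i 0 = 0"
    by (rule s_proper s_convex s_lsc s0)+
  show "\<And>a. 0 < a \<Longrightarrow> \<phi> a (\<kappa> i) = prox (\<lambda>y. ereal a * s i y)" by (rule s_prox)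
  show "\<phi> a (\<kappa> i) 0 = 0" if "0 < a" for a using nfphi[OF that kpos] unfolding nf_def by blast
  show "\<bar>\<phi> a (\<kappa> i) x - \<phi> a (\<kappa> i) y\<bar> \<le> \<bar>x - y\<bar>" if "0 < a" for a x y
    using nfphi[OF that kpos] unfolding nf_def by blast
qed

definition sPi :: "'i \<Rightarrow> real \<Rightarrow> real \<Rightarrow> real" where
  "sPi i a x = proxs.sP (s i) (\<lambda>a. \<phi> a (\<kappa> i)) a x"

lemma sPi_eq: "a > 0 \<Longrightarrow> s i (\<phi> a (\<kappa> i) x) = ereal (sPi i a x)"
  unfolding sPi_def using proxs.sP_eq[OF PX] by blast

lemma sPi_nonneg: "a > 0 \<Longrightarrow> 0 \<le> sPi i a x"
  unfolding sPi_def using proxs.sP_nonneg[OF PX] by blast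

lemma sPi_le: "a > 0 \<Longrightarrow> sPi i a x \<le> x\<^sup>2 / (2 * a)"
  unfolding sPi_def using proxs.sP_le[OF PX] by blast

definition Kb where "Kb = Sup (range \<kappa>)"

lemma Kb: "\<kappa> i \<le> Kb" "Kb > 0"
proof -
  show "\<kappa> i \<le> Kb" unfolding Kb_def using kbdd by (auto intro: cSup_upper)
  then show "Kb > 0" using kpos[of i] by linarith
qed

lemma A1: "\<And>k y a b. k > 0 \<Longrightarrow> a > 0 \<Longrightarrow> b > 0 \<Longrightarrow>
   {(w - y) / a | w. \<phi> a k w = y} = {(w - y) / b | w. \<phi> b k w = y}"
  by (rule A[unfolded assumptionA_def, THEN conjunct1, rule_format])

lemma A2ex: "\<exists>aT>0. \<exists>b>0. \<exists>c>0.
   (\<forall>k>0. \<forall>x. ereal \<bar>x\<bar> \<le> (INF w\<in>{w. \<phi> aT k w = c * k}. ereal w) \<longrightarrow>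
        \<bar>\<phi> aT k x\<bar> \<le> k\<^sup>2 / (k\<^sup>2 + aT * b) * \<bar>x\<bar>)"
  by (rule A[unfolded assumptionA_def, THEN conjunct2])

lemma BND:
  assumes a: "a > 0"
  shows "\<exists>L M. L \<ge> 0 \<and> M \<ge> 0 \<and> (\<forall>i x. \<bar>\<phi> a (\<kappa> i) x / \<kappa> i\<bar> \<le> L * \<bar>x\<bar> + M * x\<^sup>2)"
proof -
  obtain aT b c where aT: "aT > 0" and b: "b > 0" and c: "c > 0"
    and A2: "\<And>k x. k > 0 \<Longrightarrow> ereal \<bar>x\<bar> \<le> (INF w\<in>{w. \<phi> aT k w = c * k}. ereal w) \<Longrightarrow>
        \<bar>\<phi> aT k x\<bar> \<le> k\<^sup>2 / (k\<^sup>2 + aT * b) * \<bar>x\<bar>"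
    using A2ex by auto
  define T where "T = max 1 (aT / a)"
  define \<beta> where "\<beta> = aT * b"
  have \<beta>: "\<beta> > 0" unfolding \<beta>_def using aT b by simp
  have T: "T \<ge> 1" unfolding T_def by simp
  have main: "\<bar>\<phi> a (\<kappa> i) x / \<kappa> i\<bar> \<le> (T * Kb / \<beta>) * \<bar>x\<bar> + (T / (c * \<beta>)) * x\<^sup>2" for i x
  proof -
    define k where "k = \<kappa> i"
    have k: "k > 0" "k \<le> Kb" unfolding k_def using kpos Kb by auto
    define r where "r = k\<^sup>2 / (k\<^sup>2 + \<beta>)"
    have r: "r > 0" unfolding r_def using k \<beta> by (simp add: add_nonneg_pos)
    have hyp: "\<bar>\<phi> a k x'\<bar> \<le> T * r * \<bar>x'\<bar>" if "T * \<bar>x'\<bar> \<le> c * k / r" for x'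
      unfolding T_def
    proof (rule T2[OF nfphi[OF aT k(1)] nfphi[OF a k(1)] a aT _ k(1) c r])
      show "\<forall>y. {(w - y) / a |w. \<phi> a k w = y} = {(w - y) / aT |w. \<phi> aT k w = y}"
        by (intro allI A1[OF k(1) a aT])
      show "\<forall>x. ereal \<bar>x\<bar> \<le> (INF w\<in>{w. \<phi> aT k w = c * k}. ereal w) \<longrightarrow> \<bar>\<phi> aT k x\<bar> \<le> r * \<bar>x\<bar>"
        using A2[OF k(1)] unfolding r_def \<beta>_def by blast
      show "max 1 (aT / a) * \<bar>x'\<bar> \<le> c * k / r" using that unfolding T_def .
    qed
    have "\<bar>\<phi> a k x / k\<bar> \<le> (T * Kb / \<beta>) * \<bar>x\<bar> + (T / (c * \<beta>)) * x\<^sup>2"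
      by (rule T3[OF hyp nf_abs[OF nfphi[OF a k(1)]] T c k \<beta> r_def]) 
    then show ?thesis unfolding k_def .
  qed
  have "T * Kb / \<beta> \<ge> 0" "T / (c * \<beta>) \<ge> 0" using T Kb(2) \<beta> c by auto
  then show ?thesis using main by blast
qed

lemma DOM:
  assumes a: "a > 0"
  shows "\<exists>L M. \<forall>w\<in>l2. Mk_plus \<kappa> (Phi \<phi> a \<kappa> w) \<in> l2 \<and>
     nsq (Mk_plus \<kappa> (Phi \<phi> a \<kappa> w)) \<le> (2 * L\<^sup>2 + 2 * M\<^sup>2 * nsq w) * nsq w"
proof -
  obtain L M where LM: "L \<ge> 0" "M \<ge> 0" "\<And>i x. \<bar>\<phi> a (\<kappa> i) x / \<kappa> i\<bar> \<le> L * \<bar>x\<bar> + M * x\<^sup>2"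
    using BND[OF a] by blast
  have "Mk_plus \<kappa> (Phi \<phi> a \<kappa> w) \<in> l2 \<and>
     nsq (Mk_plus \<kappa> (Phi \<phi> a \<kappa> w)) \<le> (2 * L\<^sup>2 + 2 * M\<^sup>2 * nsq w) * nsq w" if w: "w \<in> l2" for w :: "'i \<Rightarrow> real"
  proof -
    have pw: "(Mk_plus \<kappa> (Phi \<phi> a \<kappa> w) i)\<^sup>2 \<le> (2 * L\<^sup>2 + 2 * M\<^sup>2 * nsq w) * (w i)\<^sup>2" for i
    proof -
      have "(Mk_plus \<kappa> (Phi \<phi> a \<kappa> w) i)\<^sup>2 = \<bar>\<phi> a (\<kappa> i) (w i) / \<kappa> i\<bar>\<^sup>2"
        unfolding Mk_plus_def Phi_def by (rule power2_abs[symmetric])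
      also have "\<dots> \<le> (L * \<bar>w i\<bar> + M * (w i)\<^sup>2)\<^sup>2"
        using LM(3)[of i "w i"] by (intro power_mono) auto
      also have "\<dots> \<le> 2 * (L * \<bar>w i\<bar>)\<^sup>2 + 2 * (M * (w i)\<^sup>2)\<^sup>2" by (rule sq_le_2)
      also have "(M * (w i)\<^sup>2)\<^sup>2 = M\<^sup>2 * (w i)\<^sup>2 * (w i)\<^sup>2" by (simp add: power2_eq_square)
      also have "\<dots> \<le> M\<^sup>2 * nsq w * (w i)\<^sup>2"
        using comp_le_nsq[OF w, of i] by (intro mult_right_mono mult_left_mono) auto
      finally have "(Mk_plus \<kappa> (Phi \<phi> a \<kappa> w) i)\<^sup>2 \<le> 2 * (L * \<bar>w i\<bar>)\<^sup>2 + 2 * (M\<^sup>2 * nsq w * (w i)\<^sup>2)" by simp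
      moreover have "(L * \<bar>w i\<bar>)\<^sup>2 = L\<^sup>2 * (w i)\<^sup>2" by (simp add: power_mult_distrib)
      moreover have "2 * L\<^sup>2 * (w i)\<^sup>2 + 2 * (M\<^sup>2 * nsq w * (w i)\<^sup>2) = (2 * L\<^sup>2 + 2 * M\<^sup>2 * nsq w) * (w i)\<^sup>2"
        by (simp add: algebra_simps)
      ultimately show ?thesis by simp
    qed
    show ?thesis using l2_comp[OF w pw] nsq_le_C[OF w pw] by blast
  qed
  then show ?thesis by blast
qed

lemma part1: "a > 0 \<Longrightarrow> dom_MPhi \<phi> a \<kappa> = l2"
proof -
  assume a: "a > 0"
  obtain L M :: real where LM: "\<And>w. w \<in> l2 \<Longrightarrow> Mk_plus \<kappa> (Phi \<phi> a \<kappa> w) \<in> l2" using DOM[OF a] by blast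
  show ?thesis
  proof
    show "dom_MPhi \<phi> a \<kappa> \<subseteq> l2" unfolding dom_MPhi_def by blast
    show "l2 \<subseteq> dom_MPhi \<phi> a \<kappa>"
    proof
      fix w :: "'i \<Rightarrow> real" assume w: "w \<in> l2"
      have "Phi \<phi> a \<kappa> w \<in> l2"
      proof (rule l2_comp[OF w, of _ 1])
        fix i
        have "\<bar>\<phi> a (\<kappa> i) (w i)\<bar> \<le> \<bar>w i\<bar>" by (rule nf_abs[OF nfphi[OF a kpos]])
        then show "(Phi \<phi> a \<kappa> w i)\<^sup>2 \<le> 1 * (w i)\<^sup>2" unfolding Phi_def by (simp add: abs_le_square_iff)
      qed
      moreover have "(\<lambda>i. Phi \<phi> a \<kappa> w i / \<kappa> i) \<in> l2" using LM[OF w] unfolding Mk_plus_def .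
      ultimately show "w \<in> dom_MPhi \<phi> a \<kappa>" unfolding dom_MPhi_def dom_Mk_plus_def using w by blast
    qed
  qed
qed

end

lemma dom_sum2:
  fixes f :: "'i \<Rightarrow> real"
  assumes x: "x \<in> l2" and y: "y \<in> l2" and f0: "\<And>i. 0 \<le> f i"
    and fb: "\<And>i. f i \<le> C * (x i)\<^sup>2 + C * (y i)\<^sup>2"
  shows "f summable_on A" "infsum f A \<le> C * infsum (\<lambda>i. (x i)\<^sup>2) A + C * infsum (\<lambda>i. (y i)\<^sup>2) A"
proof -
  have sx: "(\<lambda>i. (x i)\<^sup>2) summable_on A" using l2_summable[OF x] by (rule summable_on_subset_banach) simp
  have sy: "(\<lambda>i. (y i)\<^sup>2) summable_on A" using l2_summable[OF y] by (rule summable_on_subset_banach) simp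
  have sC: "(\<lambda>i. C * (x i)\<^sup>2 + C * (y i)\<^sup>2) summable_on A"
    using sx sy by (intro summable_on_add summable_on_cmult_right)
  show sf: "f summable_on A" by (rule summable_on_comparison_test[OF sC]) (use f0 fb in auto)
  have "infsum f A \<le> (\<Sum>\<^sub>\<infinity>i\<in>A. C * (x i)\<^sup>2 + C * (y i)\<^sup>2)" by (rule infsum_mono[OF sf sC]) (use fb in auto)
  also have "\<dots> = C * infsum (\<lambda>i. (x i)\<^sup>2) A + C * infsum (\<lambda>i. (y i)\<^sup>2) A"
    using sx sy by (simp add: infsum_add summable_on_cmult_right infsum_cmult_right')
  finally show "infsum f A \<le> C * infsum (\<lambda>i. (x i)\<^sup>2) A + C * infsum (\<lambda>i. (y i)\<^sup>2) A" .
qed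

lemma nsq_l2norm: "nsq x = (l2norm x)\<^sup>2"
  unfolding l2norm_nsq using nsq_nonneg[of x] by simp

lemma tail_le_nsq:
  assumes "x \<in> l2" shows "infsum (\<lambda>i. (x i)\<^sup>2) A \<le> nsq x"
  unfolding nsq_def
  by (rule infsum_mono2) (use l2_summable[OF assms] in \<open>auto intro: summable_on_subset_banach\<close>)

context setting
begin

lemma Rfun_eq:
  assumes a: "a > 0" and w: "w \<in> l2"
  shows "Rfun s \<kappa> (Mk_plus \<kappa> (Phi \<phi> a \<kappa> w)) = ereal (infsum (\<lambda>i. sPi i a (w i)) UNIV)"
    "(\<lambda>i. sPi i a (w i)) summable_on UNIV"
proof -
  show sm: "(\<lambda>i. sPi i a (w i)) summable_on UNIV"
    by (rule dom_sum(1)[OF w, of _ "1 / (2 * a)"]) (use sPi_nonneg[OF a] sPi_le[OF a] in auto)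
  have "Rfun s \<kappa> (Mk_plus \<kappa> (Phi \<phi> a \<kappa> w)) = infsum (\<lambda>i. ereal (sPi i a (w i))) UNIV"
    unfolding Rfun_def Mk_plus_def Phi_def
  proof (rule infsum_cong)
    fix i
    have "\<kappa> i * (\<phi> a (\<kappa> i) (w i) / \<kappa> i) = \<phi> a (\<kappa> i) (w i)" using kpos[of i] by simp
    then show "s i (\<kappa> i * (\<phi> a (\<kappa> i) (w i) / \<kappa> i)) = ereal (sPi i a (w i))"
      using sPi_eq[OF a] by simp
  qed
  also have "\<dots> = ereal (infsum (\<lambda>i. sPi i a (w i)) UNIV)" by (rule ereal_infsum[OF sm])
  finally show "Rfun s \<kappa> (Mk_plus \<kappa> (Phi \<phi> a \<kappa> w)) = ereal (infsum (\<lambda>i. sPi i a (w i)) UNIV)" .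
qed

lemma phi_cont: "a > 0 \<Longrightarrow> (X \<longlongrightarrow> x) F \<Longrightarrow> ((\<lambda>n. \<phi> a (\<kappa> i) (X n)) \<longlongrightarrow> \<phi> a (\<kappa> i) x) F"
proof -
  assume a: "a > 0" and X: "(X \<longlongrightarrow> x) F"
  have "continuous_on UNIV (\<phi> a (\<kappa> i))" by (rule nf_cont[OF nfphi[OF a kpos]])
  then have "isCont (\<phi> a (\<kappa> i)) x" by (simp add: continuous_on_eq_continuous_at)
  then show ?thesis using X by (rule isCont_tendsto_compose)
qed

lemma part2:
  fixes z :: "'i \<Rightarrow> real" and zk :: "nat \<Rightarrow> 'i \<Rightarrow> real"
  assumes a: "a > 0" and zl2: "z \<in> l2" and zkl2: "\<And>k. zk k \<in> l2"
    and conv: "(\<lambda>k. l2norm (\<lambda>i. zk k i - z i)) \<longlonglongrightarrow> 0"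
  shows "weak_conv_l2 (\<lambda>k. Mk_plus \<kappa> (Phi \<phi> a \<kappa> (zk k))) (Mk_plus \<kappa> (Phi \<phi> a \<kappa> z))
     \<and> (\<lambda>k. Rfun s \<kappa> (Mk_plus \<kappa> (Phi \<phi> a \<kappa> (zk k)))) \<longlonglongrightarrow> Rfun s \<kappa> (Mk_plus \<kappa> (Phi \<phi> a \<kappa> z))"
proof
  define d where "d k = (\<lambda>i. zk k i - z i)" for k
  have dl2: "d k \<in> l2" for k unfolding d_def by (rule l2_diff(1)[OF zkl2 zl2])
  have nd: "(\<lambda>k. nsq (d k)) \<longlonglongrightarrow> 0"
    unfolding nsq_l2norm d_def using tendsto_power[OF conv, of 2] by simp
  have comp: "\<bar>zk k i - z i\<bar> \<le> l2norm (d k)" for k i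
    using comp_le_l2norm[OF dl2, of k i] unfolding d_def by simp
  have zkconv: "(\<lambda>k. zk k i) \<longlonglongrightarrow> z i" for i
  proof -
    have "(\<lambda>k. \<bar>zk k i - z i\<bar>) \<longlonglongrightarrow> 0"
      by (rule tendsto_sandwich[of "\<lambda>_. 0" _ _ "\<lambda>k. l2norm (d k)"])
        (use comp conv in \<open>auto simp: d_def\<close>)
    then show ?thesis by (simp add: LIM_zero_iff tendsto_rabs_zero_iff)
  qed
  obtain Bd where Bd: "\<And>k. nsq (d k) \<le> Bd"
  proof -
    have "Bseq (\<lambda>k. nsq (d k))" using nd by (intro convergent_imp_Bseq convergentI)
    then obtain K where K: "\<forall>n. norm (nsq (d n)) \<le> K" by (auto elim: BseqE)
    have "nsq (d k) \<le> K" for k using K[rule_format, of k] by simp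
    then show ?thesis by (rule that)
  qed
  define B1 where "B1 = 2 * Bd + 2 * nsq z"
  have nzk: "nsq (zk k) \<le> B1" for k
  proof -
    have "nsq (zk k) \<le> 2 * nsq (d k) + 2 * nsq z"
    proof (rule nsq_tri[OF dl2 zl2])
      fix i
      have "(zk k i)\<^sup>2 = (d k i + z i)\<^sup>2" unfolding d_def by simp
      then show "(zk k i)\<^sup>2 \<le> 2 * (d k i)\<^sup>2 + 2 * (z i)\<^sup>2" using sq_le_2[of "d k i" "z i"] by simp
    qed
    then show ?thesis unfolding B1_def using Bd[of k] by simp
  qed
  obtain L M where LM: "\<And>w. w \<in> l2 \<Longrightarrow> Mk_plus \<kappa> (Phi \<phi> a \<kappa> w) \<in> l2 \<and>
     nsq (Mk_plus \<kappa> (Phi \<phi> a \<kappa> w)) \<le> (2 * L\<^sup>2 + 2 * M\<^sup>2 * nsq w) * nsq w"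
    using DOM[OF a] by blast
  show "weak_conv_l2 (\<lambda>k. Mk_plus \<kappa> (Phi \<phi> a \<kappa> (zk k))) (Mk_plus \<kappa> (Phi \<phi> a \<kappa> z))"
  proof (rule weak_conv_crit)
    show "Mk_plus \<kappa> (Phi \<phi> a \<kappa> (zk k)) \<in> l2" for k using LM[OF zkl2] by blast
    show "Mk_plus \<kappa> (Phi \<phi> a \<kappa> z) \<in> l2" using LM[OF zl2] by blast
    show "nsq (Mk_plus \<kappa> (Phi \<phi> a \<kappa> (zk k))) \<le> (2 * L\<^sup>2 + 2 * M\<^sup>2 * B1) * B1" for k
    proof -
      have "nsq (Mk_plus \<kappa> (Phi \<phi> a \<kappa> (zk k))) \<le> (2 * L\<^sup>2 + 2 * M\<^sup>2 * nsq (zk k)) * nsq (zk k)"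
        using LM[OF zkl2] by blast
      also have "\<dots> \<le> (2 * L\<^sup>2 + 2 * M\<^sup>2 * B1) * B1"
        using nzk[of k] nsq_nonneg[of "zk k"]
        by (intro mult_mono add_left_mono mult_left_mono) auto
      finally show ?thesis .
    qed
    show "(\<lambda>k. Mk_plus \<kappa> (Phi \<phi> a \<kappa> (zk k)) i) \<longlonglongrightarrow> Mk_plus \<kappa> (Phi \<phi> a \<kappa> z) i" for i
      unfolding Mk_plus_def Phi_def
      by (intro tendsto_divide tendsto_const phi_cont[OF a] zkconv) (use kpos[of i] in auto)
  qed
  show "(\<lambda>k. Rfun s \<kappa> (Mk_plus \<kappa> (Phi \<phi> a \<kappa> (zk k)))) \<longlonglongrightarrow> Rfun s \<kappa> (Mk_plus \<kappa> (Phi \<phi> a \<kappa> z))"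
    unfolding Rfun_eq(1)[OF a zkl2] Rfun_eq(1)[OF a zl2]
  proof (rule tendsto_ereal, rule conv_sum)
    show "(\<lambda>i. sPi i a (zk k i)) summable_on UNIV" for k by (rule Rfun_eq(2)[OF a zkl2])
    show "(\<lambda>i. sPi i a (z i)) summable_on UNIV" by (rule Rfun_eq(2)[OF a zl2])
    show "(\<lambda>k. sPi i a (zk k i)) \<longlonglongrightarrow> sPi i a (z i)" for i
      unfolding sPi_def by (rule proxs.sP_cont[OF PX a zkconv])
  next
    fix e :: real assume e: "e > 0"
    have ae: "a * e / 2 > 0" using a e by simp
    obtain F where F: "finite F" "infsum (\<lambda>i. (z i)\<^sup>2) (- F) \<le> a * e / 2"
      using tail_small[OF l2_summable[OF zl2] _ ae] by auto
    obtain N where N: "\<And>k. k \<ge> N \<Longrightarrow> nsq (d k) \<le> a * e / 2"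
    proof -
      have "\<forall>\<^sub>F k in sequentially. nsq (d k) < a * e / 2" using order_tendstoD(2)[OF nd ae] .
      then show ?thesis using that unfolding eventually_sequentially by (meson less_imp_le)
    qed
    have pb: "sPi i a (zk k i) \<le> (1 / a) * (d k i)\<^sup>2 + (1 / a) * (z i)\<^sup>2" for k i
    proof -
      have "sPi i a (zk k i) \<le> (zk k i)\<^sup>2 / (2 * a)" by (rule sPi_le[OF a])
      also have "(zk k i)\<^sup>2 = (d k i + z i)\<^sup>2" unfolding d_def by simp
      also have "\<dots> \<le> 2 * (d k i)\<^sup>2 + 2 * (z i)\<^sup>2" by (rule sq_le_2)
      finally have "sPi i a (zk k i) \<le> (2 * (d k i)\<^sup>2 + 2 * (z i)\<^sup>2) / (2 * a)" using a
        by (simp add: divide_right_mono)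
      also have "\<dots> = (1 / a) * (d k i)\<^sup>2 + (1 / a) * (z i)\<^sup>2" using a by (simp add: field_simps)
      finally show ?thesis .
    qed
    have t1: "\<bar>infsum (\<lambda>i. sPi i a (zk k i)) (- F)\<bar> \<le> e" if k: "k \<ge> N" for k
    proof -
      have "infsum (\<lambda>i. sPi i a (zk k i)) (- F)
            \<le> (1 / a) * infsum (\<lambda>i. (d k i)\<^sup>2) (- F) + (1 / a) * infsum (\<lambda>i. (z i)\<^sup>2) (- F)"
        by (rule dom_sum2(2)[OF dl2 zl2]) (use sPi_nonneg[OF a] pb in auto)
      also have "\<dots> \<le> (1 / a) * (a * e / 2) + (1 / a) * (a * e / 2)"
        using tail_le_nsq[OF dl2, of k "- F"] N[OF k] F(2) a
        by (intro add_mono mult_left_mono) auto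
      also have "\<dots> = e" using a by (simp add: field_simps)
      finally have "infsum (\<lambda>i. sPi i a (zk k i)) (- F) \<le> e" .
      moreover have "0 \<le> infsum (\<lambda>i. sPi i a (zk k i)) (- F)"
        by (rule infsum_nonneg) (use sPi_nonneg[OF a] in auto)
      ultimately show ?thesis by simp
    qed
    have t2: "\<bar>infsum (\<lambda>i. sPi i a (z i)) (- F)\<bar> \<le> e"
    proof -
      have "infsum (\<lambda>i. sPi i a (z i)) (- F) \<le> (1 / (2 * a)) * infsum (\<lambda>i. (z i)\<^sup>2) (- F)"
        by (rule dom_sum(2)[OF zl2]) (use sPi_nonneg[OF a] sPi_le[OF a] in auto)
      also have "\<dots> \<le> (1 / (2 * a)) * (a * e / 2)" using F(2) a by (intro mult_left_mono) auto
      also have "\<dots> \<le> e" using a e by (simp add: field_simps)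
      finally have "infsum (\<lambda>i. sPi i a (z i)) (- F) \<le> e" .
      moreover have "0 \<le> infsum (\<lambda>i. sPi i a (z i)) (- F)"
        by (rule infsum_nonneg) (use sPi_nonneg[OF a] in auto)
      ultimately show ?thesis by simp
    qed
    show "\<exists>F N. finite F \<and> (\<forall>k\<ge>N. \<bar>infsum (\<lambda>i. sPi i a (zk k i)) (- F)\<bar> \<le> e)
        \<and> \<bar>infsum (\<lambda>i. sPi i a (z i)) (- F)\<bar> \<le> e"
      using F(1) t1 t2 by blast
  qed
qed

end

context setting
begin

lemma A2T1: "\<exists>aT>0. \<exists>b>0. \<exists>c>0. \<forall>k>0. \<forall>x. \<bar>x\<bar> \<le> c * k / (k\<^sup>2 / (k\<^sup>2 + aT * b)) \<longrightarrow>
    \<bar>\<phi> aT k x\<bar> \<le> k\<^sup>2 / (k\<^sup>2 + aT * b) * \<bar>x\<bar>"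
proof -
  obtain aT b c where aT: "aT > 0" and b: "b > 0" and c: "c > 0"
    and A2: "\<And>k x. k > 0 \<Longrightarrow> ereal \<bar>x\<bar> \<le> (INF w\<in>{w. \<phi> aT k w = c * k}. ereal w) \<Longrightarrow>
        \<bar>\<phi> aT k x\<bar> \<le> k\<^sup>2 / (k\<^sup>2 + aT * b) * \<bar>x\<bar>"
    using A2ex by auto
  have "\<bar>\<phi> aT k x\<bar> \<le> k\<^sup>2 / (k\<^sup>2 + aT * b) * \<bar>x\<bar>"
    if k: "k > 0" and x: "\<bar>x\<bar> \<le> c * k / (k\<^sup>2 / (k\<^sup>2 + aT * b))" for k x
  proof (rule T1[OF nfphi[OF aT k] k c _ _ x])
    show "0 < k\<^sup>2 / (k\<^sup>2 + aT * b)" using k aT b by (simp add: add_nonneg_pos)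
    show "\<forall>x. ereal \<bar>x\<bar> \<le> (INF w\<in>{w. \<phi> aT k w = c * k}. ereal w) \<longrightarrow>
        \<bar>\<phi> aT k x\<bar> \<le> k\<^sup>2 / (k\<^sup>2 + aT * b) * \<bar>x\<bar>" using A2[OF k] by blast
  qed
  then show ?thesis using aT b c by blast
qed

lemma part3:
  fixes z :: "'i \<Rightarrow> real" and zk :: "nat \<Rightarrow> 'i \<Rightarrow> real" and cplus :: "'i \<Rightarrow> real"
    and \<delta> :: "nat \<Rightarrow> real" and \<alpha>k :: "nat \<Rightarrow> real"
  assumes zl2: "z \<in> l2" and zkl2: "\<And>k. zk k \<in> l2"
    and cl2: "cplus \<in> l2" and zc: "z = Mk \<kappa> cplus"
    and src: "\<exists>\<alpha>t>0. \<exists>w\<in>l2. Phi \<phi> \<alpha>t \<kappa> w = z"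
    and \<delta>0: "\<delta> \<longlonglongrightarrow> 0" and \<delta>b: "\<And>k. l2norm (\<lambda>i. zk k i - z i) \<le> \<delta> k"
    and \<alpha>pos: "\<And>k. \<alpha>k k > 0" and \<alpha>0: "\<alpha>k \<longlonglongrightarrow> 0"
    and \<delta>\<alpha>: "(\<lambda>k. (\<delta> k)\<^sup>2 / \<alpha>k k) \<longlonglongrightarrow> 0"
  shows "weak_conv_l2 (\<lambda>k. Mk_plus \<kappa> (Phi \<phi> (\<alpha>k k) \<kappa> (zk k))) cplus
     \<and> (\<lambda>k. Rfun s \<kappa> (Mk_plus \<kappa> (Phi \<phi> (\<alpha>k k) \<kappa> (zk k)))) \<longlonglongrightarrow> Rfun s \<kappa> cplus"
proof -
  obtain a1 w where a1: "a1 > 0" and wl2: "w \<in> l2" and zw: "Phi \<phi> a1 \<kappa> w = z" using src by blast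
  have zi: "z i = \<phi> a1 (\<kappa> i) (w i)" for i using zw unfolding Phi_def by (metis)
  have ci: "cplus i = z i / \<kappa> i" for i using zc kpos[of i] unfolding Mk_def by simp
  define sz where "sz i = sPi i a1 (w i)" for i
  have szs: "sz summable_on UNIV" unfolding sz_def by (rule Rfun_eq(2)[OF a1 wl2])
  have sz0: "0 \<le> sz i" for i unfolding sz_def by (rule sPi_nonneg[OF a1])
  have s_z: "s i (z i) = ereal (sz i)" for i unfolding zi sz_def by (rule sPi_eq[OF a1])
  define SZ where "SZ = infsum sz UNIV"
  have Rc: "Rfun s \<kappa> cplus = ereal SZ"
  proof -
    have "Rfun s \<kappa> cplus = infsum (\<lambda>i. ereal (sz i)) UNIV" unfolding Rfun_def
    proof (rule infsum_cong)
      fix i show "s i (\<kappa> i * cplus i) = ereal (sz i)" using s_z[of i] zc unfolding Mk_def by simp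
    qed
    then show ?thesis unfolding SZ_def using ereal_infsum[OF szs] by simp
  qed
  define \<sigma> where "\<sigma> k i = sPi i (\<alpha>k k) (zk k i)" for k i
  define S where "S k = infsum (\<sigma> k) UNIV" for k
  have \<sigma>s: "\<sigma> k summable_on UNIV" for k unfolding \<sigma>_def by (rule Rfun_eq(2)[OF \<alpha>pos zkl2])
  have \<sigma>0: "0 \<le> \<sigma> k i" for k i unfolding \<sigma>_def by (rule sPi_nonneg[OF \<alpha>pos])
  have RS: "Rfun s \<kappa> (Mk_plus \<kappa> (Phi \<phi> (\<alpha>k k) \<kappa> (zk k))) = ereal (S k)" for k
    unfolding S_def \<sigma>_def by (rule Rfun_eq(1)[OF \<alpha>pos zkl2])
  define d where "d k = (\<lambda>i. zk k i - z i)" for k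
  have dl2: "d k \<in> l2" for k unfolding d_def by (rule l2_diff(1)[OF zkl2 zl2])
  have nd: "nsq (d k) \<le> (\<delta> k)\<^sup>2" for k
    unfolding nsq_l2norm d_def using \<delta>b[of k] l2norm_nsq[of "\<lambda>i. zk k i - z i"] nsq_nonneg[of "\<lambda>i. zk k i - z i"]
    by (intro power_mono) auto
  have key: "\<sigma> k i \<le> (d k i)\<^sup>2 / (2 * \<alpha>k k) + sz i" for k i
  proof -
    have o: "ereal ((zk k i - \<phi> (\<alpha>k k) (\<kappa> i) (zk k i))\<^sup>2 / 2) + ereal (\<alpha>k k) * s i (\<phi> (\<alpha>k k) (\<kappa> i) (zk k i))
        \<le> ereal ((zk k i - z i)\<^sup>2 / 2) + ereal (\<alpha>k k) * s i (z i)"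
      using proxs.opt[OF PX[of i] \<alpha>pos[of k], where x = "zk k i" and u = "z i"] by simp
    then have "(zk k i - \<phi> (\<alpha>k k) (\<kappa> i) (zk k i))\<^sup>2 / 2 + \<alpha>k k * \<sigma> k i \<le> (d k i)\<^sup>2 / 2 + \<alpha>k k * sz i"
      using sPi_eq[OF \<alpha>pos] s_z unfolding \<sigma>_def d_def by simp
    then have "\<alpha>k k * \<sigma> k i \<le> (d k i)\<^sup>2 / 2 + \<alpha>k k * sz i"
      using zero_le_power2[of "zk k i - \<phi> (\<alpha>k k) (\<kappa> i) (zk k i)"] by argo
    then have "\<sigma> k i \<le> ((d k i)\<^sup>2 / 2 + \<alpha>k k * sz i) / \<alpha>k k" by (rule le_div_pos[OF \<alpha>pos])
    also have "\<dots> = (d k i)\<^sup>2 / (2 * \<alpha>k k) + sz i" using \<alpha>pos[of k] by (simp add: field_simps)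
    finally show ?thesis .
  qed
  have Sup: "S k \<le> (\<delta> k)\<^sup>2 / (2 * \<alpha>k k) + SZ" for k
  proof -
    have sd: "(\<lambda>i. (d k i)\<^sup>2 * (1 / (2 * \<alpha>k k))) summable_on UNIV"
      using l2_summable[OF dl2] by (rule summable_on_cmult_left)
    have "S k \<le> (\<Sum>\<^sub>\<infinity>i. (d k i)\<^sup>2 * (1 / (2 * \<alpha>k k)) + sz i)" unfolding S_def
      by (rule infsum_mono[OF \<sigma>s summable_on_add[OF sd szs]]) (use key in simp)
    also have "\<dots> = nsq (d k) * (1 / (2 * \<alpha>k k)) + SZ"
      unfolding SZ_def nsq_def by (simp only: infsum_add[OF sd szs] infsum_cmult_left')
    also have "\<dots> \<le> (\<delta> k)\<^sup>2 * (1 / (2 * \<alpha>k k)) + SZ"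
      using nd[of k] \<alpha>pos[of k] by (intro add_right_mono mult_right_mono) auto
    finally show ?thesis by simp
  qed
  have S0: "0 \<le> S k" for k unfolding S_def by (rule infsum_nonneg) (use \<sigma>0 in auto)
  have \<alpha>fl: "filterlim \<alpha>k (at_right 0) sequentially"
    by (rule tendsto_imp_filterlim_at_right[OF \<alpha>0]) (use \<alpha>pos in auto)
  have yconv: "(\<lambda>k. \<phi> (\<alpha>k k) (\<kappa> i) (zk k i)) \<longlonglongrightarrow> z i" for i
  proof -
    have F4: "((\<lambda>a. \<phi> a (\<kappa> i) (z i)) \<longlongrightarrow> z i) (at_right 0)"
      using filt kpos[of i] unfolding nonlin_reg_filter_def by blast
    have t2: "(\<lambda>k. \<phi> (\<alpha>k k) (\<kappa> i) (z i)) \<longlonglongrightarrow> z i"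
      using filterlim_compose[OF F4 \<alpha>fl] .
    have t1: "(\<lambda>k. \<phi> (\<alpha>k k) (\<kappa> i) (zk k i) - \<phi> (\<alpha>k k) (\<kappa> i) (z i)) \<longlonglongrightarrow> 0"
    proof -
      have b: "\<bar>\<phi> (\<alpha>k k) (\<kappa> i) (zk k i) - \<phi> (\<alpha>k k) (\<kappa> i) (z i)\<bar> \<le> \<delta> k" for k
      proof -
        have "\<bar>\<phi> (\<alpha>k k) (\<kappa> i) (zk k i) - \<phi> (\<alpha>k k) (\<kappa> i) (z i)\<bar> \<le> \<bar>zk k i - z i\<bar>"
          using nfphi[OF \<alpha>pos kpos] unfolding nf_def by blast
        also have "\<dots> \<le> l2norm (d k)" using comp_le_l2norm[OF dl2, of k i] unfolding d_def by simp
        also have "\<dots> \<le> \<delta> k" using \<delta>b[of k] unfolding d_def .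
        finally show ?thesis .
      qed
      have "(\<lambda>k. \<bar>\<phi> (\<alpha>k k) (\<kappa> i) (zk k i) - \<phi> (\<alpha>k k) (\<kappa> i) (z i)\<bar>) \<longlonglongrightarrow> 0"
        by (rule tendsto_sandwich[of "\<lambda>_. 0" _ _ \<delta>]) (use b \<delta>0 in auto)
      then show ?thesis by (simp add: tendsto_rabs_zero_iff)
    qed
    have "(\<lambda>k. (\<phi> (\<alpha>k k) (\<kappa> i) (zk k i) - \<phi> (\<alpha>k k) (\<kappa> i) (z i)) + \<phi> (\<alpha>k k) (\<kappa> i) (z i)) \<longlonglongrightarrow> 0 + z i"
      by (rule tendsto_add[OF t1 t2])
    then show ?thesis by simp
  qed
  have Sconv: "S \<longlonglongrightarrow> SZ"
  proof (rule order_tendstoI)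
    fix b assume b: "SZ < b"
    have "(\<lambda>k. (\<delta> k)\<^sup>2 / (2 * \<alpha>k k)) \<longlonglongrightarrow> 0 / 2"
      using tendsto_divide[OF \<delta>\<alpha> tendsto_const[of 2]] by (simp add: field_simps)
    then have "\<forall>\<^sub>F k in sequentially. (\<delta> k)\<^sup>2 / (2 * \<alpha>k k) < b - SZ"
      using b by (intro order_tendstoD(2)) auto
    then show "\<forall>\<^sub>F k in sequentially. S k < b"
    proof eventually_elim
      case (elim k)
      then show "S k < b" using Sup[of k] by linarith
    qed
  next
    fix b assume b: "b < SZ"
    define e where "e = (SZ - b) / 2"
    have e: "e > 0" unfolding e_def using b by simp
    obtain F where F: "finite F" "infsum sz (- F) \<le> e / 2"
      using tail_small[OF szs sz0, of "e / 2"] e by auto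
    define \<eta> where "\<eta> = e / (2 * (real (card F) + 1))"
    have \<eta>: "\<eta> > 0" unfolding \<eta>_def using e by (simp add: add_nonneg_pos)
    have ev: "\<forall>\<^sub>F k in sequentially. sz i - \<eta> < \<sigma> k i" for i
    proof -
      have "s i (z i) \<le> liminf (\<lambda>k. s i (\<phi> (\<alpha>k k) (\<kappa> i) (zk k i)))"
        using s_lsc[of i] yconv[of i] unfolding lsc_fun_def by blast
      then have "ereal (sz i) \<le> liminf (\<lambda>k. ereal (\<sigma> k i))"
        using s_z[of i] sPi_eq[OF \<alpha>pos] unfolding \<sigma>_def by simp
      moreover have "ereal (sz i - \<eta>) < ereal (sz i)" using \<eta> by simp
      ultimately have "\<forall>\<^sub>F k in sequentially. ereal (sz i - \<eta>) < ereal (\<sigma> k i)"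
        unfolding le_Liminf_iff by blast
      then show ?thesis by simp
    qed
    have "\<forall>\<^sub>F k in sequentially. \<forall>i\<in>F. sz i - \<eta> < \<sigma> k i"
      by (rule eventually_ball_finite[OF F(1)]) (use ev in blast)
    then show "\<forall>\<^sub>F k in sequentially. b < S k"
    proof eventually_elim
      case (elim k)
      have "sum sz F - real (card F) * \<eta> = (\<Sum>i\<in>F. sz i - \<eta>)" by (simp add: sum_subtractf)
      also have "\<dots> \<le> sum (\<sigma> k) F" using elim by (intro sum_mono) (auto intro: less_imp_le)
      also have "\<dots> \<le> S k" unfolding S_def
        by (rule finite_sum_le_infsum[OF \<sigma>s F(1)]) (use \<sigma>0 in auto)
      finally have h1: "sum sz F - real (card F) * \<eta> \<le> S k" .
      have "real (card F) * \<eta> < e / 2" unfolding \<eta>_def using e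
        by (simp add: field_simps)
      moreover have "SZ = sum sz F + infsum sz (- F)" unfolding SZ_def by (rule split_sum[OF szs F(1)])
      ultimately have "SZ - e < S k" using h1 F(2) e by linarith
      then show "b < S k" unfolding e_def using b by argo
    qed
  qed
  show ?thesis
  proof
    show "(\<lambda>k. Rfun s \<kappa> (Mk_plus \<kappa> (Phi \<phi> (\<alpha>k k) \<kappa> (zk k)))) \<longlonglongrightarrow> Rfun s \<kappa> cplus"
      unfolding RS Rc by (rule tendsto_ereal[OF Sconv])
  next
    obtain aT b c where aT: "aT > 0" and b: "b > 0" and c: "c > 0"
      and A2: "\<And>k x. k > 0 \<Longrightarrow> \<bar>x\<bar> \<le> c * k / (k\<^sup>2 / (k\<^sup>2 + aT * b)) \<Longrightarrow>
        \<bar>\<phi> aT k x\<bar> \<le> k\<^sup>2 / (k\<^sup>2 + aT * b) * \<bar>x\<bar>"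
      using A2T1 by auto
    define \<beta> where "\<beta> = aT * b"
    have \<beta>: "\<beta> > 0" unfolding \<beta>_def using aT b by simp
    define D where "D = \<beta>\<^sup>2 / (2 * aT * (Kb\<^sup>2 + 2 * \<beta>))"
    have D0: "D > 0" unfolding D_def using \<beta> aT Kb(2) by (intro divide_pos_pos mult_pos_pos) (auto intro: add_pos_pos)
    have sqb: "(\<phi> (\<alpha>k k) (\<kappa> i) (zk k i) / \<kappa> i)\<^sup>2 \<le> \<sigma> k i / D + (\<sigma> k i / (D * c))\<^sup>2" for k i
    proof (rule proxs.sq_bound[OF PX aT nfphi[OF aT kpos] kpos Kb(1) c \<beta> _ D_def])
      show "\<bar>\<phi> aT (\<kappa> i) x\<bar> \<le> (\<kappa> i)\<^sup>2 / ((\<kappa> i)\<^sup>2 + \<beta>) * \<bar>x\<bar>"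
        if "\<bar>x\<bar> \<le> c * \<kappa> i / ((\<kappa> i)\<^sup>2 / ((\<kappa> i)\<^sup>2 + \<beta>))" for x
        using A2[OF kpos that[unfolded \<beta>_def]] unfolding \<beta>_def .
      show "s i (\<phi> (\<alpha>k k) (\<kappa> i) (zk k i)) = ereal (\<sigma> k i)" unfolding \<sigma>_def by (rule sPi_eq[OF \<alpha>pos])
    qed
    obtain B\<delta> where B\<delta>: "\<And>k. (\<delta> k)\<^sup>2 / \<alpha>k k \<le> B\<delta>"
    proof -
      have "Bseq (\<lambda>k. (\<delta> k)\<^sup>2 / \<alpha>k k)" using \<delta>\<alpha> by (intro convergent_imp_Bseq convergentI)
      then obtain K where K: "\<forall>n. norm ((\<delta> n)\<^sup>2 / \<alpha>k n) \<le> K" by (auto elim: BseqE)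
      have "(\<delta> k)\<^sup>2 / \<alpha>k k \<le> K" for k using K[rule_format, of k] \<alpha>pos[of k] by simp
      then show ?thesis by (rule that)
    qed
    define BS where "BS = B\<delta> / 2 + SZ"
    have SB: "S k \<le> BS" for k
    proof -
      have "(\<delta> k)\<^sup>2 / (2 * \<alpha>k k) = ((\<delta> k)\<^sup>2 / \<alpha>k k) / 2" by simp
      then show ?thesis using Sup[of k] B\<delta>[of k] unfolding BS_def by linarith
    qed
    show "weak_conv_l2 (\<lambda>k. Mk_plus \<kappa> (Phi \<phi> (\<alpha>k k) \<kappa> (zk k))) cplus"
    proof (rule weak_conv_crit[OF _ cl2])
      fix k
      obtain L M :: real where LM: "\<And>w. w \<in> l2 \<Longrightarrow> Mk_plus \<kappa> (Phi \<phi> (\<alpha>k k) \<kappa> w) \<in> l2"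
        using DOM[OF \<alpha>pos[of k]] by blast
      show Xl2: "Mk_plus \<kappa> (Phi \<phi> (\<alpha>k k) \<kappa> (zk k)) \<in> l2" by (rule LM[OF zkl2])
      have s2: "(\<lambda>i. (\<sigma> k i)\<^sup>2) summable_on UNIV" "infsum (\<lambda>i. (\<sigma> k i)\<^sup>2) UNIV \<le> (S k)\<^sup>2"
        unfolding S_def using sq_sum[OF \<sigma>s \<sigma>0] by auto
      have g1: "(\<lambda>i. \<sigma> k i * (1 / D)) summable_on UNIV" using \<sigma>s by (rule summable_on_cmult_left)
      have g2: "(\<lambda>i. (\<sigma> k i)\<^sup>2 * (1 / (D * c))\<^sup>2) summable_on UNIV" using s2(1) by (rule summable_on_cmult_left)
      have "nsq (Mk_plus \<kappa> (Phi \<phi> (\<alpha>k k) \<kappa> (zk k))) \<le> (\<Sum>\<^sub>\<infinity>i. \<sigma> k i * (1 / D) + (\<sigma> k i)\<^sup>2 * (1 / (D * c))\<^sup>2)"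
        unfolding nsq_def
      proof (rule infsum_mono[OF l2_summable[OF Xl2] summable_on_add[OF g1 g2]])
        fix i
        have "(\<sigma> k i / (D * c))\<^sup>2 = (\<sigma> k i)\<^sup>2 * (1 / (D * c))\<^sup>2" by (simp add: power_divide)
        then show "(Mk_plus \<kappa> (Phi \<phi> (\<alpha>k k) \<kappa> (zk k)) i)\<^sup>2 \<le> \<sigma> k i * (1 / D) + (\<sigma> k i)\<^sup>2 * (1 / (D * c))\<^sup>2"
          using sqb[of k i] unfolding Mk_plus_def Phi_def by simp
      qed
      also have "\<dots> = S k * (1 / D) + infsum (\<lambda>i. (\<sigma> k i)\<^sup>2) UNIV * (1 / (D * c))\<^sup>2"
        unfolding S_def by (simp only: infsum_add[OF g1 g2] infsum_cmult_left')
      also have "\<dots> \<le> BS * (1 / D) + BS\<^sup>2 * (1 / (D * c))\<^sup>2"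
      proof (intro add_mono mult_right_mono)
        show "S k \<le> BS" by (rule SB)
        show "infsum (\<lambda>i. (\<sigma> k i)\<^sup>2) UNIV \<le> BS\<^sup>2"
          using s2(2) power_mono[OF SB[of k] S0[of k], of 2] by linarith
      qed (use D0 in auto)
      finally show "nsq (Mk_plus \<kappa> (Phi \<phi> (\<alpha>k k) \<kappa> (zk k))) \<le> BS * (1 / D) + BS\<^sup>2 * (1 / (D * c))\<^sup>2" .
    next
      fix i
      show "(\<lambda>k. Mk_plus \<kappa> (Phi \<phi> (\<alpha>k k) \<kappa> (zk k)) i) \<longlonglongrightarrow> cplus i"
        unfolding Mk_plus_def Phi_def ci
        by (intro tendsto_divide tendsto_const yconv) (use kpos[of i] in auto)
    qed
  qed
qed

end

theorem proposition4p3: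
  fixes \<phi> :: "real \<Rightarrow> real \<Rightarrow> real \<Rightarrow> real"
    and \<kappa> :: "'i::countable \<Rightarrow> real"
    and s :: "'i \<Rightarrow> real \<Rightarrow> ereal"
    and \<alpha> :: real and z :: "'i \<Rightarrow> real" and zk :: "nat \<Rightarrow> 'i \<Rightarrow> real"
  assumes filt: "nonlin_reg_filter \<phi>"
    and A: "assumptionA \<phi>"
    and kpos: "\<And>i. \<kappa> i > 0"
    and kbdd: "bdd_above (range \<kappa>)"
    and s_proper: "\<And>i. proper_fun (s i)"
    and s_convex: "\<And>i. convex_fun (s i)"
    and s_lsc: "\<And>i. lsc_fun (s i)"
    and s0: "\<And>i. s i 0 = 0"
    and s_prox: "\<And>i a. a > 0 \<Longrightarrow> \<phi> a (\<kappa> i) = prox (\<lambda>y. ereal a * s i y)"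
    and apos: "\<alpha> > 0"
    and zl2: "z \<in> l2"
    and zkl2: "\<And>k. zk k \<in> l2"
    and zk_conv: "(\<lambda>k. l2norm (\<lambda>i. zk k i - z i)) \<longlonglongrightarrow> 0"
  shows
    "dom_MPhi \<phi> \<alpha> \<kappa> = l2
     \<and> (weak_conv_l2 (\<lambda>k. Mk_plus \<kappa> (Phi \<phi> \<alpha> \<kappa> (zk k))) (Mk_plus \<kappa> (Phi \<phi> \<alpha> \<kappa> z))
        \<and> (\<lambda>k. Rfun s \<kappa> (Mk_plus \<kappa> (Phi \<phi> \<alpha> \<kappa> (zk k))))
            \<longlonglongrightarrow> Rfun s \<kappa> (Mk_plus \<kappa> (Phi \<phi> \<alpha> \<kappa> z)))
     \<and> (\<forall>cplus \<delta> \<alpha>k. cplus \<in> l2 \<and> z = Mk \<kappa> cplus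
          \<and> (\<exists>\<alpha>t>0. \<exists>w\<in>l2. Phi \<phi> \<alpha>t \<kappa> w = z)
          \<and> \<delta> \<longlonglongrightarrow> 0 \<and> (\<forall>k. l2norm (\<lambda>i. zk k i - z i) \<le> \<delta> k)
          \<and> (\<forall>k. \<alpha>k k > 0) \<and> \<alpha>k \<longlonglongrightarrow> 0
          \<and> (\<lambda>k. (\<delta> k)\<^sup>2 / \<alpha>k k) \<longlonglongrightarrow> 0
        \<longrightarrow> weak_conv_l2 (\<lambda>k. Mk_plus \<kappa> (Phi \<phi> (\<alpha>k k) \<kappa> (zk k))) cplus
          \<and> (\<lambda>k. Rfun s \<kappa> (Mk_plus \<kappa> (Phi \<phi> (\<alpha>k k) \<kappa> (zk k)))) \<longlonglongrightarrow> Rfun s \<kappa> cplus)"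
  proof -
  interpret setting \<phi> \<kappa> s
    by unfold_locales (rule filt A kpos kbdd s_proper s_convex s_lsc s0 s_prox; assumption?)+
  have P1: "dom_MPhi \<phi> \<alpha> \<kappa> = l2" by (rule part1[OF apos])
  have P2: "weak_conv_l2 (\<lambda>k. Mk_plus \<kappa> (Phi \<phi> \<alpha> \<kappa> (zk k))) (Mk_plus \<kappa> (Phi \<phi> \<alpha> \<kappa> z))
        \<and> (\<lambda>k. Rfun s \<kappa> (Mk_plus \<kappa> (Phi \<phi> \<alpha> \<kappa> (zk k))))
            \<longlonglongrightarrow> Rfun s \<kappa> (Mk_plus \<kappa> (Phi \<phi> \<alpha> \<kappa> z))"
    by (rule part2[OF apos zl2 zkl2 zk_conv])
  have P3: "weak_conv_l2 (\<lambda>k. Mk_plus \<kappa> (Phi \<phi> (\<alpha>k k) \<kappa> (zk k))) cplus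
          \<and> (\<lambda>k. Rfun s \<kappa> (Mk_plus \<kappa> (Phi \<phi> (\<alpha>k k) \<kappa> (zk k)))) \<longlonglongrightarrow> Rfun s \<kappa> cplus"
    if H: "cplus \<in> l2 \<and> z = Mk \<kappa> cplus
          \<and> (\<exists>\<alpha>t>0. \<exists>w\<in>l2. Phi \<phi> \<alpha>t \<kappa> w = z)
          \<and> \<delta> \<longlonglongrightarrow> 0 \<and> (\<forall>k. l2norm (\<lambda>i. zk k i - z i) \<le> \<delta> k)
          \<and> (\<forall>k. \<alpha>k k > 0) \<and> \<alpha>k \<longlonglongrightarrow> 0
          \<and> (\<lambda>k. (\<delta> k)\<^sup>2 / \<alpha>k k) \<longlonglongrightarrow> 0" for cplus \<delta> \<alpha>k
    using H by (intro part3[OF zl2 zkl2]) auto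
  show ?thesis using P1 P2 P3 by blast
qed

end
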